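(* Let $\vec p$ be a no-signalling box with inputs $x,y$ and outputs $a,b$, and let $\tau$ be a density operator on $\mathcal{H}_C\otimes\mathcal{H}_D$ (Alice holds $C$, Bob holds $D$). Suppose Alice, on input $x'$, applies to $C$ an instrument $\{\Lambda_{x|x'}\}_x$ (completely positive maps with $\sum_x\Lambda_{x|x'}$ trace preserving), feeds $x$ into the box, obtains $a$, and then measures $C$ with a POVM $\{M^{(2)}_{a'|a,x,x'}\}_{a'}$ producing $a'$; Bob similarly uses an instrument $\{\Gamma_{y|y'}\}_y$ on $D$ and POVMs $\{N^{(2)}_{b'|b,y,y'}\}_{b'}$. The resulting box is $$p'(a',b'|x',y')=\sum_{a,b,x,y}\mathrm{Tr}\Big(M^{(2)}_{a'|a,x,x'}\otimes N^{(2)}_{b'|b,y,y'}\,(\Lambda_{x|x'}\otimes\Gamma_{y|y'})[\tau]\Big)\,p(a,b|x,y).$$ Then: if $\tau$ is separable, $r_{\mathcal{L}}(\vec p')\le r_{\mathcal{L}}(\vec p)$ (equivalently $r_{\mathbb{S}}(\vec p')\le r_{\mathbb{S}}(\vec p)$); and for any density operator $\tau$, $r_{\mathcal{Q}}(\vec p')\le r_{\mathcal{Q}}(\vec p)$ (equivalently $r_{\mathbb{D}}(\vec p')\le r_{\mathbb{D}}(\vec p)$). Moreover, if $O\rightarrow\vec p$ then $O\otimes\tau\rightarrow\vec p'$ with respect to the cut $AC:BD$.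
   Context: Boxes $\vec p=(p(a,b|x,y))$ over finite alphabets are nonnegative with $\sum_{a,b}p(a,b|x,y)=1$; $\mathcal{L}$ is the set of local boxes $\sum_iq_ip_A^i(a|x)p_B^i(b|y)$; $\mathcal{Q}$ the set of boxes $\mathrm{Tr}(M_{a|x}\otimes N_{b|y}\rho)$ for density operators $\rho$ on finite-dimensional bipartite spaces and local POVMs. A pseudo-state is a Hermitian unit-trace operator; $O\rightarrow\vec p$ means $\vec p$ arises from $O$ by local POVMs via $p=\mathrm{Tr}(M_{a|x}\otimes N_{b|y}O)$. A state is separable if it is a convex combination of product states $\sigma_A\otimes\sigma_B$. For a set $S$, $r_S(v):=\inf\{t\ge0:\exists w\in S,\ (v+tw)/(1+t)\in S\}$; $r_{\mathcal{L}},r_{\mathcal{Q}}$ are robustnesses of boxes w.r.t. $\mathcal{L},\mathcal{Q}$; for pseudo-states $r_{\mathbb{S}}(O)$, $r_{\mathbb{D}}(O)$ are robustnesses w.r.t. separable states and density operators; $r_{\mathbb{S}}(\vec p):=\inf_{O\rightarrow\vec p}r_{\mathbb{S}}(O)$, $r_{\mathbb{D}}(\vec p):=\inf_{O\rightarrow\vec p}r_{\mathbb{D}}(O)$. *)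

theory Defs
  imports "Jordan_Normal_Form.Matrix" "HOL-Library.Extended_Real"
begin

text \<open>An operator on a d-dimensional Hilbert space is a complex d x d matrix.
  A bipartite space H_1 (dim d1) tensor H_2 (dim d2) is identified with
  complex^(d1*d2), basis index (i,k) corresponding to i*d2+k.\<close>

definition mtrace :: "complex mat \<Rightarrow> complex" where
  "mtrace A = (\<Sum>i<dim_row A. A $$ (i,i))"

definition kron :: "complex mat \<Rightarrow> complex mat \<Rightarrow> complex mat" where
  "kron A B = mat (dim_row A * dim_row B) (dim_col A * dim_col B)
     (\<lambda>(r,c). A $$ (r div dim_row B, c div dim_col B) * B $$ (r mod dim_row B, c mod dim_col B))"

definition hermitian_op :: "nat \<Rightarrow> complex mat \<Rightarrow> bool" where
  "hermitian_op d A \<longleftrightarrow> A \<in> carrier_mat d d \<and>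
     (\<forall>i<d. \<forall>j<d. A $$ (i,j) = cnj (A $$ (j,i)))"

definition psd_op :: "nat \<Rightarrow> complex mat \<Rightarrow> bool" where
  "psd_op d A \<longleftrightarrow> A \<in> carrier_mat d d \<and>
     (\<forall>v \<in> carrier_vec d. let z = (\<Sum>i<d. cnj (v $ i) * (A *\<^sub>v v) $ i) in Im z = 0 \<and> Re z \<ge> 0)"

definition density_op :: "nat \<Rightarrow> complex mat \<Rightarrow> bool" where
  "density_op d \<rho> \<longleftrightarrow> psd_op d \<rho> \<and> mtrace \<rho> = 1"

definition pseudo_state :: "nat \<Rightarrow> complex mat \<Rightarrow> bool" where
  "pseudo_state d Op \<longleftrightarrow> hermitian_op d Op \<and> mtrace Op = 1"

definition separable :: "nat \<Rightarrow> nat \<Rightarrow> complex mat \<Rightarrow> bool" where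
  "separable dA dB \<rho> \<longleftrightarrow> (\<exists>(n::nat) (q::nat \<Rightarrow> real) \<sigma>A \<sigma>B.
      (\<forall>i<n. q i \<ge> 0 \<and> density_op dA (\<sigma>A i) \<and> density_op dB (\<sigma>B i)) \<and>
      (\<Sum>i<n. q i) = 1 \<and>
      \<rho> = mat (dA*dB) (dA*dB)
             (\<lambda>(r,c). \<Sum>i<n. complex_of_real (q i) * kron (\<sigma>A i) (\<sigma>B i) $$ (r,c)))"

definition povm :: "nat \<Rightarrow> nat \<Rightarrow> (nat \<Rightarrow> complex mat) \<Rightarrow> bool" where
  "povm d n M \<longleftrightarrow> (\<forall>a<n. psd_op d (M a)) \<and>
     (\<forall>r<d. \<forall>c<d. (\<Sum>a<n. M a $$ (r,c)) = (1\<^sub>m d :: complex mat) $$ (r,c))"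

definition eunit :: "nat \<Rightarrow> nat \<Rightarrow> nat \<Rightarrow> complex mat" where
  "eunit d i j = mat d d (\<lambda>(r,c). if r = i \<and> c = j then 1 else 0)"

definition lin_map :: "nat \<Rightarrow> nat \<Rightarrow> (complex mat \<Rightarrow> complex mat) \<Rightarrow> bool" where
  "lin_map d d' L \<longleftrightarrow>
     (\<forall>X \<in> carrier_mat d d. L X \<in> carrier_mat d' d') \<and>
     (\<forall>X \<in> carrier_mat d d. \<forall>Y \<in> carrier_mat d d. L (X + Y) = L X + L Y) \<and>
     (\<forall>X \<in> carrier_mat d d. \<forall>z. L (z \<cdot>\<^sub>m X) = z \<cdot>\<^sub>m L X)"

text \<open>(L1 tensor L2)[X] for linear maps L1 : d1 -> d1', L2 : d2 -> d2', defined by linear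
  extension from matrix units.\<close>
definition map_tensor :: "nat \<Rightarrow> nat \<Rightarrow> nat \<Rightarrow> nat \<Rightarrow>
    (complex mat \<Rightarrow> complex mat) \<Rightarrow> (complex mat \<Rightarrow> complex mat) \<Rightarrow> complex mat \<Rightarrow> complex mat" where
  "map_tensor d1 d2 d1' d2' L1 L2 X = mat (d1'*d2') (d1'*d2') (\<lambda>(r,c).
     \<Sum>i<d1. \<Sum>j<d1. \<Sum>k<d2. \<Sum>l<d2.
       X $$ (i*d2+k, j*d2+l) * (L1 (eunit d1 i j)) $$ (r div d2', c div d2')
                             * (L2 (eunit d2 k l)) $$ (r mod d2', c mod d2'))"

definition cp_map :: "nat \<Rightarrow> nat \<Rightarrow> (complex mat \<Rightarrow> complex mat) \<Rightarrow> bool" where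
  "cp_map d d' L \<longleftrightarrow> lin_map d d' L \<and>
     (\<forall>k X. psd_op (k*d) X \<longrightarrow> psd_op (k*d') (map_tensor k d k d' (\<lambda>Y. Y) L X))"

definition instrument :: "nat \<Rightarrow> nat \<Rightarrow> (nat \<Rightarrow> complex mat \<Rightarrow> complex mat) \<Rightarrow> bool" where
  "instrument d n L \<longleftrightarrow> (\<forall>x<n. cp_map d d (L x)) \<and>
     (\<forall>X \<in> carrier_mat d d. (\<Sum>x<n. mtrace (L x X)) = mtrace X)"

text \<open>A box p(a,b|x,y) is a function p a b x y, with outputs a < nA, b < nB and
  inputs x < mX, y < mY; only values on this domain matter.\<close>

definition is_box :: "nat \<Rightarrow> nat \<Rightarrow> nat \<Rightarrow> nat \<Rightarrow> (nat \<Rightarrow> nat \<Rightarrow> nat \<Rightarrow> nat \<Rightarrow> real) \<Rightarrow> bool" where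
  "is_box nA nB mX mY p \<longleftrightarrow>
     (\<forall>a<nA. \<forall>b<nB. \<forall>x<mX. \<forall>y<mY. p a b x y \<ge> 0) \<and>
     (\<forall>x<mX. \<forall>y<mY. (\<Sum>a<nA. \<Sum>b<nB. p a b x y) = 1)"

definition no_signalling :: "nat \<Rightarrow> nat \<Rightarrow> nat \<Rightarrow> nat \<Rightarrow> (nat \<Rightarrow> nat \<Rightarrow> nat \<Rightarrow> nat \<Rightarrow> real) \<Rightarrow> bool" where
  "no_signalling nA nB mX mY p \<longleftrightarrow> is_box nA nB mX mY p \<and>
     (\<forall>a<nA. \<forall>x<mX. \<forall>y<mY. \<forall>y'<mY. (\<Sum>b<nB. p a b x y) = (\<Sum>b<nB. p a b x y')) \<and>
     (\<forall>b<nB. \<forall>y<mY. \<forall>x<mX. \<forall>x'<mX. (\<Sum>a<nA. p a b x y) = (\<Sum>a<nA. p a b x' y))"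

definition local_box :: "nat \<Rightarrow> nat \<Rightarrow> nat \<Rightarrow> nat \<Rightarrow> (nat \<Rightarrow> nat \<Rightarrow> nat \<Rightarrow> nat \<Rightarrow> real) \<Rightarrow> bool" where
  "local_box nA nB mX mY p \<longleftrightarrow>
     (\<exists>(n::nat) (q::nat \<Rightarrow> real) (pA::nat \<Rightarrow> nat \<Rightarrow> nat \<Rightarrow> real) (pB::nat \<Rightarrow> nat \<Rightarrow> nat \<Rightarrow> real).
        (\<forall>i<n. q i \<ge> 0) \<and> (\<Sum>i<n. q i) = 1 \<and>
        (\<forall>i<n. \<forall>x<mX. (\<forall>a<nA. pA i a x \<ge> 0) \<and> (\<Sum>a<nA. pA i a x) = 1) \<and>
        (\<forall>i<n. \<forall>y<mY. (\<forall>b<nB. pB i b y \<ge> 0) \<and> (\<Sum>b<nB. pB i b y) = 1) \<and>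
        (\<forall>a<nA. \<forall>b<nB. \<forall>x<mX. \<forall>y<mY. p a b x y = (\<Sum>i<n. q i * pA i a x * pB i b y)))"

text \<open>Op -> p: p arises from the operator Op on H_A (dim dA) tensor H_B (dim dB) by local POVMs.\<close>
definition produces :: "nat \<Rightarrow> nat \<Rightarrow> nat \<Rightarrow> nat \<Rightarrow> nat \<Rightarrow> nat \<Rightarrow> complex mat
    \<Rightarrow> (nat \<Rightarrow> nat \<Rightarrow> nat \<Rightarrow> nat \<Rightarrow> real) \<Rightarrow> bool" where
  "produces nA nB mX mY dA dB Op p \<longleftrightarrow>
     (\<exists>(M::nat \<Rightarrow> nat \<Rightarrow> complex mat) (N::nat \<Rightarrow> nat \<Rightarrow> complex mat).
        (\<forall>x<mX. povm dA nA (M x)) \<and> (\<forall>y<mY. povm dB nB (N y)) \<and>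
        (\<forall>a<nA. \<forall>b<nB. \<forall>x<mX. \<forall>y<mY.
           complex_of_real (p a b x y) = mtrace (kron (M x a) (N y b) * Op)))"

definition quantum_box :: "nat \<Rightarrow> nat \<Rightarrow> nat \<Rightarrow> nat \<Rightarrow> (nat \<Rightarrow> nat \<Rightarrow> nat \<Rightarrow> nat \<Rightarrow> real) \<Rightarrow> bool" where
  "quantum_box nA nB mX mY p \<longleftrightarrow>
     (\<exists>dA dB \<rho>. density_op (dA*dB) \<rho> \<and> produces nA nB mX mY dA dB \<rho> p)"

text \<open>r_S(v) = inf {t >= 0 : exists w in S, (v + t w)/(1+t) in S}, valued in extended reals
  (inf of the empty set is +infinity).\<close>
definition box_robustness :: "((nat \<Rightarrow> nat \<Rightarrow> nat \<Rightarrow> nat \<Rightarrow> real) \<Rightarrow> bool) \<Rightarrow> nat \<Rightarrow> nat \<Rightarrow> nat \<Rightarrow> nat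
    \<Rightarrow> (nat \<Rightarrow> nat \<Rightarrow> nat \<Rightarrow> nat \<Rightarrow> real) \<Rightarrow> ereal" where
  "box_robustness S nA nB mX mY v = Inf (ereal ` {t. t \<ge> 0 \<and>
     (\<exists>w u. S w \<and> S u \<and>
        (\<forall>a<nA. \<forall>b<nB. \<forall>x<mX. \<forall>y<mY. (v a b x y + t * w a b x y) / (1 + t) = u a b x y))})"

definition r_L where "r_L nA nB mX mY = box_robustness (local_box nA nB mX mY) nA nB mX mY"
definition r_Q where "r_Q nA nB mX mY = box_robustness (quantum_box nA nB mX mY) nA nB mX mY"

definition op_robustness :: "(complex mat \<Rightarrow> bool) \<Rightarrow> complex mat \<Rightarrow> ereal" where
  "op_robustness S Op = Inf (ereal ` {t. t \<ge> 0 \<and>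
     (\<exists>W. S W \<and> S (complex_of_real (1 / (1 + t)) \<cdot>\<^sub>m (Op + complex_of_real t \<cdot>\<^sub>m W)))})"

definition r_S_op where "r_S_op dA dB Op = op_robustness (separable dA dB) Op"
definition r_D_op where "r_D_op dA dB Op = op_robustness (density_op (dA*dB)) Op"

definition r_S_box :: "nat \<Rightarrow> nat \<Rightarrow> nat \<Rightarrow> nat \<Rightarrow> (nat \<Rightarrow> nat \<Rightarrow> nat \<Rightarrow> nat \<Rightarrow> real) \<Rightarrow> ereal" where
  "r_S_box nA nB mX mY p = Inf {r_S_op dA dB Op | dA dB Op.
     pseudo_state (dA*dB) Op \<and> produces nA nB mX mY dA dB Op p}"

definition r_D_box :: "nat \<Rightarrow> nat \<Rightarrow> nat \<Rightarrow> nat \<Rightarrow> (nat \<Rightarrow> nat \<Rightarrow> nat \<Rightarrow> nat \<Rightarrow> real) \<Rightarrow> ereal" where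
  "r_D_box nA nB mX mY p = Inf {r_D_op dA dB Op | dA dB Op.
     pseudo_state (dA*dB) Op \<and> produces nA nB mX mY dA dB Op p}"

text \<open>Given Op on A tensor B and tau on C tensor D, the operator Op tensor tau regarded as an
  operator on (A tensor C) tensor (B tensor D); basis index ((a*dC+c)*(dB*dD) + (b*dD+d)).\<close>
definition cut_tensor :: "nat \<Rightarrow> nat \<Rightarrow> nat \<Rightarrow> nat \<Rightarrow> complex mat \<Rightarrow> complex mat \<Rightarrow> complex mat" where
  "cut_tensor dA dB dC dD Op \<tau> = mat (dA*dC*(dB*dD)) (dA*dC*(dB*dD)) (\<lambda>(r,s).
     let rAC = r div (dB*dD); rBD = r mod (dB*dD); sAC = s div (dB*dD); sBD = s mod (dB*dD) in
     Op $$ ((rAC div dC)*dB + rBD div dD, (sAC div dC)*dB + sBD div dD) *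
     \<tau> $$ ((rAC mod dC)*dD + rBD mod dD, (sAC mod dC)*dD + sBD mod dD))"

end

theory Submission
  imports Defs
begin

definition cnonneg :: "complex \<Rightarrow> bool" where
  "cnonneg z \<longleftrightarrow> Im z = 0 \<and> Re z \<ge> 0"

definition qff :: "nat \<Rightarrow> (nat \<Rightarrow> nat \<Rightarrow> complex) \<Rightarrow> (nat \<Rightarrow> complex) \<Rightarrow> complex" where
  "qff n f v = (\<Sum>i<n. \<Sum>j<n. cnj (v i) * f i j * v j)"

definition psdf :: "nat \<Rightarrow> (nat \<Rightarrow> nat \<Rightarrow> complex) \<Rightarrow> bool" where
  "psdf n f \<longleftrightarrow> (\<forall>v. cnonneg (qff n f v))"

lemma cnonneg_add: "cnonneg a \<Longrightarrow> cnonneg b \<Longrightarrow> cnonneg (a+b)"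
  by (auto simp: cnonneg_def)
lemma cnonneg_sum: "(\<And>k. k \<in> S \<Longrightarrow> cnonneg (f k)) \<Longrightarrow> cnonneg (sum f S)"
  by (induction S rule: infinite_finite_induct) (auto simp: cnonneg_def)
lemma cnonneg_mult: "cnonneg a \<Longrightarrow> cnonneg b \<Longrightarrow> cnonneg (a*b)"
  by (auto simp: cnonneg_def)
lemma cnonneg_cnj_mult: "cnonneg (cnj z * z)"
  by (auto simp: cnonneg_def)
lemma cnonneg_of_real: "x \<ge> 0 \<Longrightarrow> cnonneg (complex_of_real x)"
  by (auto simp: cnonneg_def)
lemma cnonneg_real: "cnonneg z \<Longrightarrow> z = complex_of_real (Re z)"
  by (auto simp: cnonneg_def complex_eq_iff)

lemma qff_cong: "(\<And>i. i < n \<Longrightarrow> v i = v' i) \<Longrightarrow> (\<And>i j. i<n \<Longrightarrow> j<n \<Longrightarrow> f i j = f' i j)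
   \<Longrightarrow> qff n f v = qff n f' v'"
  unfolding qff_def by (intro sum.cong) auto

lemma sum_delta_r: fixes g :: "nat \<Rightarrow> complex" shows "finite S \<Longrightarrow> (\<Sum>j\<in>S. g j * (if j = i then a else 0)) = (if i \<in> S then g i * a else 0)"
proof -
  have "(\<Sum>j\<in>S. g j * (if j = i then a else 0)) = (\<Sum>j\<in>S. if j = i then g j * a else 0)"
    by (rule sum.cong) auto
  moreover assume "finite S"
  ultimately show ?thesis by (simp add: sum.delta')
qed
lemma sum_delta_l: fixes g :: "nat \<Rightarrow> complex" shows "finite S \<Longrightarrow> (\<Sum>j\<in>S. cnj (if j = i then a else 0) * g j) = (if i \<in> S then cnj a * g i else 0)"
proof -
  have "(\<Sum>j\<in>S. cnj (if j = i then a else 0) * g j) = (\<Sum>j\<in>S. if j = i then cnj a * g j else 0)"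
    by (rule sum.cong) auto
  moreover assume "finite S"
  ultimately show ?thesis by (simp add: sum.delta')
qed

lemma qff_add: "qff n f (\<lambda>t. u t + w t) = qff n f u + qff n f w + (\<Sum>i<n. \<Sum>j<n. cnj (u i) * f i j * w j) + (\<Sum>i<n. \<Sum>j<n. cnj (w i) * f i j * u j)"
  unfolding qff_def by (simp add: algebra_simps sum.distrib)

lemma qff_one: "i < n \<Longrightarrow> qff n f (\<lambda>t. if t = i then a else 0) = cnj a * f i i * a"
  unfolding qff_def by (simp add: sum_delta_r sum_delta_l sum_distrib_right[symmetric])

lemma bil_delta: fixes n :: nat shows "i < n \<Longrightarrow> k < n \<Longrightarrow> (\<Sum>t<n. \<Sum>j<n. cnj (if t = i then a else 0) * f t j * (if j = k then b else 0)) = cnj a * f i k * b"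
proof -
  assume h: "i < n" "k < n"
  have "(\<Sum>t<n. \<Sum>j<n. cnj (if t = i then a else 0) * f t j * (if j = k then b else 0))
     = (\<Sum>t<n. cnj (if t = i then a else 0) * (f t k * b))"
    using h by (simp add: sum_delta_r mult.assoc sum_distrib_left[symmetric])
  also have "... = cnj a * f i k * b" using h by (simp add: sum_delta_l mult.assoc)
  finally show ?thesis .
qed

lemma qff_two: "i < n \<Longrightarrow> k < n \<Longrightarrow> i \<noteq> k \<Longrightarrow>
   qff n f (\<lambda>t. if t = i then a else if t = k then b else 0) =
   cnj a * f i i * a + cnj a * f i k * b + cnj b * f k i * a + cnj b * f k k * b"
proof -
  assume h: "i < n" "k < n" "i \<noteq> k"
  have e: "(\<lambda>t. if t = i then a else if t = k then b else 0) = (\<lambda>t. (if t = i then a else 0) + (if t = k then b else 0))"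
    using h by auto
  show ?thesis unfolding e qff_add using h by (simp add: qff_one bil_delta)
qed


lemma psdf_diag: "psdf n f \<Longrightarrow> i < n \<Longrightarrow> cnonneg (f i i)"
  using qff_one[of i n f 1] unfolding psdf_def by (metis complex_cnj_one mult_1 mult_1_right)

lemma psdf_herm: assumes p: "psdf n f" and i: "i < n" and k: "k < n"
  shows "f i k = cnj (f k i)"
proof (cases "i = k")
  case True then show ?thesis using psdf_diag[OF p i] by (auto simp: cnonneg_def complex_eq_iff)
next
  case False
  have d1: "cnonneg (f i i)" "cnonneg (f k k)" using psdf_diag p i k by auto
  have "cnonneg (qff n f (\<lambda>t. if t = i then 1 else if t = k then 1 else 0))" using p psdf_def by blast
  hence A: "cnonneg (f i i + f i k + f k i + f k k)" using qff_two[OF i k False, of f 1 1] by simp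
  have "cnonneg (qff n f (\<lambda>t. if t = i then 1 else if t = k then \<i> else 0))" using p psdf_def by blast
  hence B: "cnonneg (f i i + f i k * \<i> - \<i> * f k i - \<i> * f k k * \<i>)" using qff_two[OF i k False, of f 1 \<i>] by simp
  from A B d1 show ?thesis by (auto simp: cnonneg_def complex_eq_iff)
qed


lemma psdf_zero: assumes p: "psdf n f" and i: "i < n" and k: "k < n" and z: "f k k = 0"
  shows "f i k = 0"
proof (cases "i = k")
  case True then show ?thesis using z by simp
next
  case False
  obtain r where r: "f i i = complex_of_real r" "r \<ge> 0" using psdf_diag[OF p i]
    by (metis cnonneg_def cnonneg_real)
  define t :: real where "t = 1 / (r + 1)"
  have t: "t > 0" "t * r < 1" using r(2) by (auto simp: t_def field_simps)
  define x where "x = Re (f i k)"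
  define y where "y = Im (f i k)"
  have fki: "f k i = cnj (f i k)" using psdf_herm[OF p k i] .
  define \<alpha> where "\<alpha> = - complex_of_real t * f i k"
  have "cnonneg (qff n f (\<lambda>s. if s = i then \<alpha> else if s = k then 1 else 0))" using p psdf_def by blast
  hence "cnonneg (cnj \<alpha> * f i i * \<alpha> + cnj \<alpha> * f i k + f k i * \<alpha>)" using qff_two[OF i k False, of f \<alpha> 1] z by simp
  hence "Re (cnj \<alpha> * f i i * \<alpha> + cnj \<alpha> * f i k + f k i * \<alpha>) \<ge> 0" by (simp add: cnonneg_def)
  hence "r * t * t * (x*x + y*y) - 2 * t * (x*x+y*y) \<ge> 0"
    unfolding fki r \<alpha>_def x_def y_def by (simp add: algebra_simps)
  hence "t * (x*x + y*y) * (t * r - 2) \<ge> 0" by (simp add: algebra_simps)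
  moreover have "t * r - 2 < 0" using t by simp
  ultimately have "t * (x*x + y*y) \<le> 0" by (metis mult_nonneg_nonpos2 order.strict_implies_order not_le mult_neg_pos linorder_not_less mult_le_0_iff zero_le_mult_iff)
  hence "x*x + y*y \<le> 0" using t by (simp add: mult_le_0_iff)
  hence "x = 0" "y = 0" by (auto simp: sum_squares_le_zero_iff)
  thus ?thesis by (simp add: x_def y_def complex_eq_iff)
qed


lemma qff_Suc: "qff (Suc n) f V = qff n f V + (\<Sum>i<n. cnj (V i) * f i n) * V n
   + cnj (V n) * (\<Sum>j<n. f n j * V j) + cnj (V n) * f n n * V n"
  unfolding qff_def by (simp add: lessThan_Suc sum.distrib sum_distrib_left sum_distrib_right algebra_simps)

lemma psdf_restrict: assumes "psdf (Suc n) f" shows "psdf n f"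
  unfolding psdf_def
proof
  fix v
  have "cnonneg (qff (Suc n) f (\<lambda>t. if t < n then v t else 0))" using assms psdf_def by blast
  moreover have "qff (Suc n) f (\<lambda>t. if t < n then v t else 0) = qff n f v"
  proof -
    have "qff n f (\<lambda>t. if t < n then v t else 0) = qff n f v" by (rule qff_cong) auto
    thus ?thesis unfolding qff_Suc by simp
  qed
  ultimately show "cnonneg (qff n f v)" by simp
qed

lemma psdf_decomp: "psdf n f \<Longrightarrow> \<exists>w. \<forall>i<n. \<forall>j<n. f i j = (\<Sum>m<n. w m i * cnj (w m j))"
proof (induction n arbitrary: f)
  case 0 then show ?case by simp
next
  case (Suc n)
  note p = Suc.prems
  have herm: "\<And>i j. i < Suc n \<Longrightarrow> j < Suc n \<Longrightarrow> f i j = cnj (f j i)" using psdf_herm[OF p] by blast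
  obtain s where s: "f n n = complex_of_real s" "s \<ge> 0" using psdf_diag[OF p, of n]
    by (metis cnonneg_def cnonneg_real lessI)
  show ?case
  proof (cases "s = 0")
    case True
    have z1: "\<And>i. i < Suc n \<Longrightarrow> f i n = 0" using psdf_zero[OF p _ lessI] s True by simp
    have z2: "\<And>i. i < Suc n \<Longrightarrow> f n i = 0" using z1 herm by (metis complex_cnj_zero lessI)
    obtain w' where w': "\<forall>i<n. \<forall>j<n. f i j = (\<Sum>m<n. w' m i * cnj (w' m j))"
      using Suc.IH[OF psdf_restrict[OF p]] by blast
    define w where "w m i = (if m < n \<and> i < n then w' m i else 0)" for m i
    have "f i j = (\<Sum>m<Suc n. w m i * cnj (w m j))" if ij: "i < Suc n" "j < Suc n" for i j
    proof (cases "i < n \<and> j < n")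
      case True then show ?thesis using w' by (simp add: w_def)
    next
      case False
      hence "f i j = 0" using z1 z2 ij less_Suc_eq by auto
      thus ?thesis using False by (cases "i < n") (auto simp: w_def)
    qed
    thus ?thesis by blast
  next
    case False
    hence spos: "s > 0" using s by simp
    define sq where "sq = complex_of_real (sqrt s)"
    have sq0: "sq \<noteq> 0" using spos by (simp add: sq_def)
    have sqsq: "sq * sq = complex_of_real s" using s by (simp add: sq_def flip: of_real_mult)
    have cnjsq: "cnj sq = sq" by (simp add: sq_def)
    define u where "u i = f i n / sq" for i
    define g where "g i j = f i j - u i * cnj (u j)" for i j
    have pg: "psdf n g" unfolding psdf_def
    proof
      fix v
      define T where "T = (\<Sum>j<n. f n j * v j)"
      define \<beta> where "\<beta> = - T / complex_of_real s"
      define V where "V t = (if t < n then v t else \<beta>)" for t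
      have hn: "f i n = cnj (f n i)" if "i < n" for i using herm[of i n] that by simp
      have A: "(\<Sum>i<n. cnj (v i) * f i n) = cnj T"
        unfolding T_def cnj_sum by (intro sum.cong) (auto simp: hn mult.commute)
      have B: "(\<Sum>j<n. cnj (u j) * v j) = T / sq"
        unfolding T_def u_def sum_divide_distrib by (intro sum.cong) (auto simp: hn cnjsq mult.commute)
      have C: "(\<Sum>i<n. cnj (v i) * u i) = cnj T / sq"
        unfolding u_def using A by (simp add: sum_divide_distrib[symmetric] mult.commute)
      have "qff n g v = qff n f v - (\<Sum>i<n. \<Sum>j<n. cnj (v i) * (u i * cnj (u j)) * v j)"
        unfolding qff_def g_def by (simp add: algebra_simps sum_subtractf)
      also have "(\<Sum>i<n. \<Sum>j<n. cnj (v i) * (u i * cnj (u j)) * v j) = (\<Sum>i<n. cnj (v i) * u i) * (\<Sum>j<n. cnj (u j) * v j)"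
        by (simp add: sum_product mult.assoc)
      also have "... = cnj T * T / complex_of_real s" unfolding B C by (simp add: sqsq[symmetric])
      finally have q1: "qff n g v = qff n f v - cnj T * T / complex_of_real s" .
      have "qff (Suc n) f V = qff n f v + cnj T * \<beta> + cnj \<beta> * T + cnj \<beta> * complex_of_real s * \<beta>"
      proof -
        have "qff n f V = qff n f v" by (rule qff_cong) (auto simp: V_def)
        moreover have "(\<Sum>i<n. cnj (V i) * f i n) = cnj T" using A by (simp add: V_def)
        moreover have "(\<Sum>j<n. f n j * V j) = T" by (simp add: V_def T_def)
        ultimately show ?thesis unfolding qff_Suc by (simp add: V_def s)
      qed
      also have "... = qff n f v - cnj T * T / complex_of_real s"
        unfolding \<beta>_def using spos by (simp add: field_simps)
      finally have "qff n g v = qff (Suc n) f V" using q1 by simp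
      thus "cnonneg (qff n g v)" using p psdf_def by metis
    qed
    obtain w' where w': "\<forall>i<n. \<forall>j<n. g i j = (\<Sum>m<n. w' m i * cnj (w' m j))"
      using Suc.IH[OF pg] by blast
    define w where "w m i = (if m < n then (if i < n then w' m i else 0) else u i)" for m i
    have un: "u n = sq" unfolding u_def s using sq0 sqsq by (simp add: field_simps)
    have "f i j = (\<Sum>m<Suc n. w m i * cnj (w m j))" if ij: "i < Suc n" "j < Suc n" for i j
    proof (cases "i < n \<and> j < n")
      case True then show ?thesis using w' by (simp add: w_def g_def) (metis diff_add_cancel)
    next
      case False
      hence "i = n \<or> j = n" using ij by auto
      hence "f i j = u i * cnj (u j)"
      proof
        assume "i = n" thus ?thesis using herm[OF ij(1) ij(2)] un sq0 cnjsq by (simp add: u_def)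
      next
        assume "j = n" thus ?thesis using un sq0 cnjsq by (simp add: u_def)
      qed
      thus ?thesis using False by (cases "i < n") (auto simp: w_def)
    qed
    thus ?thesis by blast
  qed
qed

lemma qff_sum_expand: "qff n (\<lambda>i j. \<Sum>m\<in>S. G m i j) v = (\<Sum>m\<in>S. qff n (G m) v)"
proof -
  have "qff n (\<lambda>i j. \<Sum>m\<in>S. G m i j) v = (\<Sum>i<n. \<Sum>j<n. \<Sum>m\<in>S. cnj (v i) * G m i j * v j)"
    unfolding qff_def by (simp only: sum_distrib_left sum_distrib_right)
  also have "... = (\<Sum>i<n. \<Sum>m\<in>S. \<Sum>j<n. cnj (v i) * G m i j * v j)"
    by (rule sum.cong[OF refl], rule sum.swap)
  also have "... = (\<Sum>m\<in>S. qff n (G m) v)" unfolding qff_def by (rule sum.swap)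
  finally show ?thesis .
qed

lemma qff_rank1: "qff n (\<lambda>i j. w i * cnj (w j)) v = cnj (\<Sum>j<n. cnj (w j) * v j) * (\<Sum>j<n. cnj (w j) * v j)"
  unfolding qff_def cnj_sum sum_product by (simp add: mult_ac)

lemma psdf_rank1: "psdf n (\<lambda>i j. \<Sum>m\<in>S. w m i * cnj (w m j))"
  unfolding psdf_def qff_sum_expand qff_rank1 by (intro allI cnonneg_sum cnonneg_cnj_mult)

lemma psdf_trace: assumes f: "psdf n f" and g: "psdf n g"
  shows "cnonneg (\<Sum>i<n. \<Sum>j<n. f i j * g j i)"
proof -
  obtain w where w: "\<forall>i<n. \<forall>j<n. g i j = (\<Sum>m<n. w m i * cnj (w m j))" using psdf_decomp[OF g] by blast
  have "(\<Sum>i<n. \<Sum>j<n. f i j * g j i) = (\<Sum>i<n. \<Sum>j<n. \<Sum>m<n. cnj (w m i) * f i j * w m j)"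
    using w by (intro sum.cong) (auto simp: sum_distrib_left mult_ac)
  also have "... = (\<Sum>i<n. \<Sum>m<n. \<Sum>j<n. cnj (w m i) * f i j * w m j)"
    by (rule sum.cong[OF refl], rule sum.swap)
  also have "... = (\<Sum>m<n. qff n f (w m))" unfolding qff_def by (rule sum.swap)
  finally show ?thesis using f by (simp add: psdf_def cnonneg_sum)
qed

lemma qff_schur1: "qff n (\<lambda>i j. f i j * (a i * cnj (a j))) v = qff n f (\<lambda>i. v i * cnj (a i))"
  unfolding qff_def by (simp add: mult_ac)

lemma psdf_schur: assumes f: "psdf n f" and g: "psdf n g"
  shows "psdf n (\<lambda>i j. f i j * g i j)"
  unfolding psdf_def
proof
  fix v
  obtain w where w: "\<forall>i<n. \<forall>j<n. g i j = (\<Sum>m<n. w m i * cnj (w m j))" using psdf_decomp[OF g] by blast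
  have "qff n (\<lambda>i j. f i j * g i j) v = qff n (\<lambda>i j. \<Sum>m<n. f i j * (w m i * cnj (w m j))) v"
    using w by (intro qff_cong) (auto simp: sum_distrib_left)
  also have "... = (\<Sum>m<n. qff n f (\<lambda>i. v i * cnj (w m i)))"
    unfolding qff_sum_expand qff_schur1 ..
  finally show "cnonneg (qff n (\<lambda>i j. f i j * g i j) v)" using f by (simp add: psdf_def cnonneg_sum)
qed

lemma psdf_sum: "(\<And>k. k \<in> S \<Longrightarrow> psdf n (F k)) \<Longrightarrow> psdf n (\<lambda>i j. \<Sum>k\<in>S. F k i j)"
  unfolding psdf_def qff_sum_expand by (simp add: cnonneg_sum)

lemma psdf_scale: "psdf n f \<Longrightarrow> c \<ge> 0 \<Longrightarrow> psdf n (\<lambda>i j. complex_of_real c * f i j)"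
  unfolding psdf_def
proof
  fix v assume h: "\<forall>v. cnonneg (qff n f v)" "c \<ge> 0"
  have "qff n (\<lambda>i j. complex_of_real c * f i j) v = complex_of_real c * qff n f v"
    unfolding qff_def by (simp add: sum_distrib_left mult_ac)
  thus "cnonneg (qff n (\<lambda>i j. complex_of_real c * f i j) v)" using h
    by (simp add: cnonneg_mult cnonneg_of_real)
qed

lemma psdf_pullback: assumes f: "psdf n f" and h: "\<And>r. r < m \<Longrightarrow> h r < n"
  shows "psdf m (\<lambda>r c. f (h r) (h c))"
  unfolding psdf_def
proof
  fix v
  define U :: "nat \<Rightarrow> complex" where "U i = (\<Sum>r\<in>{r. r \<in> {..<m} \<and> h r = i}. v r)" for i
  have hs: "h ` {..<m} \<subseteq> {..<n}" using h by auto
  have inner: "(\<Sum>j<n. f a j * U j) = (\<Sum>c<m. f a (h c) * v c)" for a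
  proof -
    have "(\<Sum>j<n. f a j * U j) = (\<Sum>j<n. \<Sum>c\<in>{c. c \<in> {..<m} \<and> h c = j}. f a (h c) * v c)"
      unfolding U_def sum_distrib_left by (intro sum.cong) auto
    also have "... = (\<Sum>c<m. f a (h c) * v c)" by (rule sum.group[OF _ _ hs]) auto
    finally show ?thesis .
  qed
  have "qff n f U = (\<Sum>i<n. cnj (U i) * (\<Sum>j<n. f i j * U j))"
    unfolding qff_def by (simp add: sum_distrib_left mult.assoc)
  also have "... = (\<Sum>i<n. cnj (U i) * (\<Sum>c<m. f i (h c) * v c))"
    unfolding inner ..
  also have "... = (\<Sum>i<n. \<Sum>r\<in>{r. r \<in> {..<m} \<and> h r = i}. cnj (v r) * (\<Sum>c<m. f (h r) (h c) * v c))"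
    unfolding U_def cnj_sum sum_distrib_right by (intro sum.cong) auto
  also have "... = (\<Sum>r<m. cnj (v r) * (\<Sum>c<m. f (h r) (h c) * v c))"
    by (rule sum.group[OF _ _ hs]) auto
  also have "... = qff m (\<lambda>r c. f (h r) (h c)) v"
    unfolding qff_def by (simp add: sum_distrib_left mult.assoc)
  finally show "cnonneg (qff m (\<lambda>r c. f (h r) (h c)) v)" using f psdf_def by metis
qed

lemma psd_op_psdf: "psd_op n A \<longleftrightarrow> A \<in> carrier_mat n n \<and> psdf n (\<lambda>i j. A $$ (i,j))"
proof -
  have key: "(\<Sum>i<n. cnj (v $ i) * (A *\<^sub>v v) $ i) = qff n (\<lambda>i j. A $$ (i,j)) (\<lambda>i. v $ i)"
    if "A \<in> carrier_mat n n" "v \<in> carrier_vec n" for v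
    using that unfolding qff_def
    by (simp add: mult_mat_vec_def scalar_prod_def atLeast0LessThan sum_distrib_left mult.assoc)
  show ?thesis
  proof
    assume a: "psd_op n A"
    hence c: "A \<in> carrier_mat n n" by (simp add: psd_op_def)
    have "cnonneg (qff n (\<lambda>i j. A $$ (i,j)) v)" for v
    proof -
      have "qff n (\<lambda>i j. A $$ (i,j)) v = qff n (\<lambda>i j. A $$ (i,j)) (\<lambda>i. vec n v $ i)"
        by (rule qff_cong) auto
      also have "... = (\<Sum>i<n. cnj (vec n v $ i) * (A *\<^sub>v vec n v) $ i)"
        using key[OF c, of "vec n v"] by simp
      finally have e: "qff n (\<lambda>i j. A $$ (i,j)) v = (\<Sum>i<n. cnj (vec n v $ i) * (A *\<^sub>v vec n v) $ i)" .
      have "vec n v \<in> carrier_vec n" by simp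
      hence "cnonneg (\<Sum>i<n. cnj (vec n v $ i) * (A *\<^sub>v vec n v) $ i)"
        using a unfolding psd_op_def Let_def cnonneg_def by blast
      thus ?thesis using e by simp
    qed
    thus "A \<in> carrier_mat n n \<and> psdf n (\<lambda>i j. A $$ (i,j))" using c psdf_def by blast
  next
    assume a: "A \<in> carrier_mat n n \<and> psdf n (\<lambda>i j. A $$ (i,j))"
    thus "psd_op n A" unfolding psd_op_def Let_def using key psdf_def cnonneg_def by auto
  qed
qed

lemma idx_bound: "i < m \<Longrightarrow> j < n \<Longrightarrow> i * n + j < m * (n::nat)"
proof -
  assume h: "i < m" "j < n"
  have "i * n + j < (i+1) * n" using h by simp
  also have "(i+1) * n \<le> m * n" using h by (intro mult_le_mono1) simp
  finally show ?thesis .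
qed

lemma idx_div [simp]: "j < n \<Longrightarrow> (i * n + j) div n = (i::nat)" by simp
lemma idx_mod [simp]: "j < n \<Longrightarrow> (i * n + j) mod n = (j::nat)" by simp

lemma div_bound: "r < dA * dB \<Longrightarrow> r div dB < (dA::nat)"
  by (simp add: less_mult_imp_div_less)
lemma mod_bound: "r < dA * dB \<Longrightarrow> r mod dB < (dB::nat)"
  by (metis mod_less_divisor mult_0_right neq0_conv not_less0)

lemma sum_split_mult: fixes m n :: nat shows "(\<Sum>r<m*n. f r) = (\<Sum>i<m. \<Sum>j<n. f (i*n+j)::'a::comm_monoid_add)"
proof -
  have "(\<Sum>i<m. \<Sum>j<n. f (i*n+j)) = (\<Sum>p\<in>{..<m}\<times>{..<n}. f (fst p * n + snd p))"
    by (simp add: sum.cartesian_product case_prod_beta)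
  also have "... = (\<Sum>r<m*n. f r)"
  proof (rule sum.reindex_bij_witness[where i = "\<lambda>r. (r div n, r mod n)" and j = "\<lambda>p. fst p * n + snd p"])
    fix r assume "r \<in> {..<m*n}"
    thus "(r div n, r mod n) \<in> {..<m} \<times> {..<n}"
      by (auto simp: div_bound mod_bound)
  qed (auto simp: idx_bound)
  finally show ?thesis by simp
qed

lemma mtrace_mult: "A \<in> carrier_mat n n \<Longrightarrow> B \<in> carrier_mat n n \<Longrightarrow>
   mtrace (A * B) = (\<Sum>i<n. \<Sum>j<n. A $$ (i,j) * B $$ (j,i))"
  unfolding mtrace_def by (simp add: scalar_prod_def atLeast0LessThan)

lemma kron_carrier: "A \<in> carrier_mat dA dA \<Longrightarrow> B \<in> carrier_mat dB dB \<Longrightarrow> kron A B \<in> carrier_mat (dA*dB) (dA*dB)"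
  unfolding kron_def by simp

lemma kron_index: "A \<in> carrier_mat dA dA \<Longrightarrow> B \<in> carrier_mat dB dB \<Longrightarrow> r < dA*dB \<Longrightarrow> c < dA*dB \<Longrightarrow>
  kron A B $$ (r,c) = A $$ (r div dB, c div dB) * B $$ (r mod dB, c mod dB)"
  unfolding kron_def by simp

lemma psd_kron: assumes A: "psd_op dA A" and B: "psd_op dB B" shows "psd_op (dA*dB) (kron A B)"
proof -
  have cA: "A \<in> carrier_mat dA dA" and pA: "psdf dA (\<lambda>i j. A $$ (i,j))"
    and cB: "B \<in> carrier_mat dB dB" and pB: "psdf dB (\<lambda>i j. B $$ (i,j))"
    using A B psd_op_psdf by auto
  have p1: "psdf (dA*dB) (\<lambda>r c. A $$ (r div dB, c div dB))"
    by (rule psdf_pullback[OF pA, of _ "\<lambda>r. r div dB", simplified]) (simp add: div_bound)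
  have p2: "psdf (dA*dB) (\<lambda>r c. B $$ (r mod dB, c mod dB))"
    by (rule psdf_pullback[OF pB, of _ "\<lambda>r. r mod dB", simplified]) (simp add: mod_bound)
  have "psdf (dA*dB) (\<lambda>r c. A $$ (r div dB, c div dB) * B $$ (r mod dB, c mod dB))"
    by (rule psdf_schur[OF p1 p2])
  moreover have "qff (dA*dB) (\<lambda>r c. A $$ (r div dB, c div dB) * B $$ (r mod dB, c mod dB)) v
     = qff (dA*dB) (\<lambda>r c. kron A B $$ (r,c)) v" for v
    by (rule qff_cong) (auto simp: kron_index[OF cA cB])
  ultimately have "psdf (dA*dB) (\<lambda>r c. kron A B $$ (r,c))" by (simp add: psdf_def)
  thus ?thesis using kron_carrier[OF cA cB] psd_op_psdf by blast
qed

lemma trace_reindex: fixes n m :: nat shows "(\<Sum>r<n*m. \<Sum>c<n*m. F (r div m) (c div m) (r mod m) (c mod m) * X c r)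
   = (\<Sum>i<n. \<Sum>j<n. \<Sum>k<m. \<Sum>l<m. F i j k l * X (j*m+l) (i*m+k))"
proof -
  have "(\<Sum>r<n*m. \<Sum>c<n*m. F (r div m) (c div m) (r mod m) (c mod m) * X c r)
     = (\<Sum>i<n. \<Sum>k<m. \<Sum>j<n. \<Sum>l<m. F i j k l * X (j*m+l) (i*m+k))"
    unfolding sum_split_mult by simp
  also have "... = (\<Sum>i<n. \<Sum>j<n. \<Sum>k<m. \<Sum>l<m. F i j k l * X (j*m+l) (i*m+k))"
    by (rule sum.cong[OF refl], rule sum.swap)
  finally show ?thesis .
qed

lemma sum4_prod: "(\<Sum>b\<in>B. \<Sum>d\<in>D. \<Sum>b'\<in>B'. \<Sum>d'\<in>D'. F b b' * G d d') =
   (\<Sum>b\<in>B. \<Sum>b'\<in>B'. F b b') * (\<Sum>d\<in>D. \<Sum>d'\<in>D'. (G d d' :: 'a :: comm_semiring_0))"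
  by (simp only: sum_product)

lemma sum2_prod: "(\<Sum>b\<in>B. \<Sum>d\<in>D. F b * G d) = (\<Sum>b\<in>B. F b) * (\<Sum>d\<in>D. (G d :: 'a :: comm_semiring_0))"
  by (simp add: sum_product)

definition cA :: "nat \<Rightarrow> nat \<Rightarrow> nat \<Rightarrow> nat \<Rightarrow> nat" where
  "cA dB dC dD r = (r div (dB*dD) div dC) * dB + (r mod (dB*dD)) div dD"
definition cC :: "nat \<Rightarrow> nat \<Rightarrow> nat \<Rightarrow> nat \<Rightarrow> nat" where
  "cC dB dC dD r = (r div (dB*dD) mod dC) * dD + (r mod (dB*dD)) mod dD"

lemma cut_carrier: "cut_tensor dA dB dC dD Op \<tau> \<in> carrier_mat (dA*dC*(dB*dD)) (dA*dC*(dB*dD))"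
  unfolding cut_tensor_def by simp

lemma cut_index: "r < dA*dC*(dB*dD) \<Longrightarrow> c < dA*dC*(dB*dD) \<Longrightarrow>
  cut_tensor dA dB dC dD Op \<tau> $$ (r,c) = Op $$ (cA dB dC dD r, cA dB dC dD c) * \<tau> $$ (cC dB dC dD r, cC dB dC dD c)"
  unfolding cut_tensor_def cA_def cC_def by (simp add: Let_def)

lemma cA_bound: assumes "r < dA*dC*(dB*dD)" shows "cA dB dC dD r < dA*dB"
proof -
  have a: "r div (dB*dD) < dA*dC" using assms div_bound by blast
  have b: "r mod (dB*dD) < dB*dD" using assms mod_bound by blast
  show ?thesis unfolding cA_def by (intro idx_bound div_bound[OF a] div_bound[OF b])
qed
lemma cC_bound: assumes "r < dA*dC*(dB*dD)" shows "cC dB dC dD r < dC*dD"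
proof -
  have a: "r div (dB*dD) < dA*dC" using assms div_bound by blast
  have b: "r mod (dB*dD) < dB*dD" using assms mod_bound by blast
  show ?thesis unfolding cC_def by (intro idx_bound mod_bound[OF a] mod_bound[OF b])
qed

lemma cA_idx: "\<gamma> < dC \<Longrightarrow> \<beta> < dB \<Longrightarrow> \<delta> < dD \<Longrightarrow>
   cA dB dC dD ((\<alpha>*dC+\<gamma>)*(dB*dD) + (\<beta>*dD+\<delta>)) = \<alpha>*dB+\<beta>"
  unfolding cA_def by (simp add: idx_bound)
lemma cC_idx: "\<gamma> < dC \<Longrightarrow> \<beta> < dB \<Longrightarrow> \<delta> < dD \<Longrightarrow>
   cC dB dC dD ((\<alpha>*dC+\<gamma>)*(dB*dD) + (\<beta>*dD+\<delta>)) = \<gamma>*dD+\<delta>"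
  unfolding cC_def by (simp add: idx_bound)

lemma psd_cut: assumes O: "psd_op (dA*dB) Op" and T: "psd_op (dC*dD) \<tau>"
  shows "psd_op (dA*dC*(dB*dD)) (cut_tensor dA dB dC dD Op \<tau>)"
proof -
  have pA: "psdf (dA*dB) (\<lambda>i j. Op $$ (i,j))" and pB: "psdf (dC*dD) (\<lambda>i j. \<tau> $$ (i,j))"
    using O T psd_op_psdf by auto
  have p1: "psdf (dA*dC*(dB*dD)) (\<lambda>r c. Op $$ (cA dB dC dD r, cA dB dC dD c))"
    by (rule psdf_pullback[OF pA, of _ "cA dB dC dD", simplified]) (simp add: cA_bound)
  have p2: "psdf (dA*dC*(dB*dD)) (\<lambda>r c. \<tau> $$ (cC dB dC dD r, cC dB dC dD c))"
    by (rule psdf_pullback[OF pB, of _ "cC dB dC dD", simplified]) (simp add: cC_bound)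
  have "psdf (dA*dC*(dB*dD)) (\<lambda>r c. Op $$ (cA dB dC dD r, cA dB dC dD c) * \<tau> $$ (cC dB dC dD r, cC dB dC dD c))"
    by (rule psdf_schur[OF p1 p2])
  moreover have "qff (dA*dC*(dB*dD)) (\<lambda>r c. Op $$ (cA dB dC dD r, cA dB dC dD c) * \<tau> $$ (cC dB dC dD r, cC dB dC dD c)) v
     = qff (dA*dC*(dB*dD)) (\<lambda>r c. cut_tensor dA dB dC dD Op \<tau> $$ (r,c)) v" for v
    by (rule qff_cong) (auto simp: cut_index)
  ultimately have "psdf (dA*dC*(dB*dD)) (\<lambda>r c. cut_tensor dA dB dC dD Op \<tau> $$ (r,c))" by (simp add: psdf_def)
  thus ?thesis using cut_carrier psd_op_psdf by blast
qed

lemma sum_split4: fixes dA dB dC dD :: nat shows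
  "(\<Sum>r<dA*dC*(dB*dD). f r) = (\<Sum>\<alpha><dA. \<Sum>\<gamma><dC. \<Sum>\<beta><dB. \<Sum>\<delta><dD. f ((\<alpha>*dC+\<gamma>)*(dB*dD) + (\<beta>*dD+\<delta>)))"
  unfolding sum_split_mult ..

lemma trace_cut: "mtrace (cut_tensor dA dB dC dD Op \<tau>) = mtrace Op * mtrace \<tau>"
  if "Op \<in> carrier_mat (dA*dB) (dA*dB)" "\<tau> \<in> carrier_mat (dC*dD) (dC*dD)"
proof -
  have "mtrace (cut_tensor dA dB dC dD Op \<tau>) = (\<Sum>r<dA*dC*(dB*dD). cut_tensor dA dB dC dD Op \<tau> $$ (r,r))"
    unfolding mtrace_def using cut_carrier[THEN carrier_matD(1)] by simp
  also have "... = (\<Sum>\<alpha><dA. \<Sum>\<gamma><dC. \<Sum>\<beta><dB. \<Sum>\<delta><dD. Op $$ (\<alpha>*dB+\<beta>, \<alpha>*dB+\<beta>) * \<tau> $$ (\<gamma>*dD+\<delta>, \<gamma>*dD+\<delta>))"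
    unfolding sum_split4 by (simp add: cut_index idx_bound cA_idx cC_idx)
  also have "... = (\<Sum>\<alpha><dA. \<Sum>\<beta><dB. Op $$ (\<alpha>*dB+\<beta>, \<alpha>*dB+\<beta>)) * (\<Sum>\<gamma><dC. \<Sum>\<delta><dD. \<tau> $$ (\<gamma>*dD+\<delta>, \<gamma>*dD+\<delta>))"
    by (rule sum4_prod)
  also have "... = mtrace Op * mtrace \<tau>"
    using that by (simp add: mtrace_def sum_split_mult)
  finally show ?thesis .
qed

definition trK :: "nat \<Rightarrow> nat \<Rightarrow> (nat \<Rightarrow> nat \<Rightarrow> complex) \<Rightarrow> (nat \<Rightarrow> nat \<Rightarrow> complex) \<Rightarrow> (nat \<Rightarrow> nat \<Rightarrow> complex) \<Rightarrow> complex" where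
  "trK m n p q X = (\<Sum>i<n. \<Sum>j<n. \<Sum>k<m. \<Sum>l<m. p i j * q k l * X (j*m+l) (i*m+k))"

lemma swap_out4: "(\<Sum>i\<in>I. \<Sum>j\<in>J. \<Sum>k\<in>K. \<Sum>l\<in>L. \<Sum>s\<in>S. g i j k l s) = (\<Sum>s\<in>S. \<Sum>i\<in>I. \<Sum>j\<in>J. \<Sum>k\<in>K. \<Sum>l\<in>L. (g i j k l s :: 'a::comm_monoid_add))"
  by (simp only: sum.swap[of _ S])

lemma trK_sum: "trK m n (\<lambda>i j. \<Sum>s\<in>S. p s i j) (\<lambda>k l. \<Sum>t\<in>T. q t k l) X = (\<Sum>s\<in>S. \<Sum>t\<in>T. trK m n (p s) (q t) X)"
proof -
  have "trK m n (\<lambda>i j. \<Sum>s\<in>S. p s i j) (\<lambda>k l. \<Sum>t\<in>T. q t k l) X =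
     (\<Sum>i<n. \<Sum>j<n. \<Sum>k<m. \<Sum>l<m. \<Sum>t\<in>T. \<Sum>s\<in>S. p s i j * q t k l * X (j*m+l) (i*m+k))"
    unfolding trK_def by (simp only: sum_distrib_left sum_distrib_right)
  also have "... = (\<Sum>t\<in>T. \<Sum>i<n. \<Sum>j<n. \<Sum>k<m. \<Sum>l<m. \<Sum>s\<in>S. p s i j * q t k l * X (j*m+l) (i*m+k))"
    by (rule swap_out4)
  also have "... = (\<Sum>t\<in>T. \<Sum>s\<in>S. \<Sum>i<n. \<Sum>j<n. \<Sum>k<m. \<Sum>l<m. p s i j * q t k l * X (j*m+l) (i*m+k))"
    by (rule sum.cong[OF refl], rule swap_out4)
  also have "... = (\<Sum>s\<in>S. \<Sum>t\<in>T. trK m n (p s) (q t) X)"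
    unfolding trK_def by (rule sum.swap)
  finally show ?thesis .
qed

lemma trace_kron_gen: assumes "P \<in> carrier_mat n n" "Q \<in> carrier_mat m m" "X \<in> carrier_mat (n*m) (n*m)"
  shows "mtrace (kron P Q * X) = trK m n (\<lambda>i j. P $$ (i,j)) (\<lambda>k l. Q $$ (k,l)) (\<lambda>r c. X $$ (r,c))"
proof -
  have "mtrace (kron P Q * X) = (\<Sum>r<n*m. \<Sum>c<n*m. kron P Q $$ (r,c) * X $$ (c,r))"
    using assms kron_carrier by (simp add: mtrace_mult)
  also have "... = (\<Sum>r<n*m. \<Sum>c<n*m. (P $$ (r div m, c div m) * Q $$ (r mod m, c mod m)) * X $$ (c,r))"
    using assms by (simp add: kron_index)
  also have "... = trK m n (\<lambda>i j. P $$ (i,j)) (\<lambda>k l. Q $$ (k,l)) (\<lambda>r c. X $$ (r,c))"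
    unfolding trK_def trace_reindex[of "\<lambda>i j k l. P $$ (i, j) * Q $$ (k, l)"] ..
  finally show ?thesis .
qed


lemma sum8_prod: "(\<Sum>\<alpha>\<in>A. \<Sum>\<gamma>\<in>C. \<Sum>\<alpha>'\<in>A'. \<Sum>\<gamma>'\<in>C'. \<Sum>\<beta>\<in>B. \<Sum>\<delta>\<in>D. \<Sum>\<beta>'\<in>B'. \<Sum>\<delta>'\<in>D'. f \<alpha> \<alpha>' \<beta> \<beta>' * g \<gamma> \<gamma>' \<delta> \<delta>')
  = (\<Sum>\<alpha>\<in>A. \<Sum>\<alpha>'\<in>A'. \<Sum>\<beta>\<in>B. \<Sum>\<beta>'\<in>B'. f \<alpha> \<alpha>' \<beta> \<beta>') * (\<Sum>\<gamma>\<in>C. \<Sum>\<gamma>'\<in>C'. \<Sum>\<delta>\<in>D. \<Sum>\<delta>'\<in>D'. (g \<gamma> \<gamma>' \<delta> \<delta>' :: 'a::comm_semiring_0))"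
  by (simp only: sum4_prod)

lemma cut_single:
  assumes "Op \<in> carrier_mat (dA*dB) (dA*dB)" "\<tau> \<in> carrier_mat (dC*dD) (dC*dD)"
  shows "trK (dB*dD) (dA*dC) (\<lambda>R R'. a (R div dC) (R' div dC) * c (R mod dC) (R' mod dC))
     (\<lambda>S S'. b (S div dD) (S' div dD) * d (S mod dD) (S' mod dD))
     (\<lambda>r s. cut_tensor dA dB dC dD Op \<tau> $$ (r,s))
   = trK dB dA a b (\<lambda>r s. Op $$ (r,s)) * trK dD dC c d (\<lambda>r s. \<tau> $$ (r,s))"
proof -
  have bnd: "(\<alpha>*dC+\<gamma>)*(dB*dD) + (\<beta>*dD+\<delta>) < dA*dC*(dB*dD)"
    if "\<alpha> < dA" "\<gamma> < dC" "\<beta> < dB" "\<delta> < dD" for \<alpha> \<gamma> \<beta> \<delta>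
    using that by (intro idx_bound) auto
  have "trK (dB*dD) (dA*dC) (\<lambda>R R'. a (R div dC) (R' div dC) * c (R mod dC) (R' mod dC))
     (\<lambda>S S'. b (S div dD) (S' div dD) * d (S mod dD) (S' mod dD))
     (\<lambda>r s. cut_tensor dA dB dC dD Op \<tau> $$ (r,s)) =
     (\<Sum>\<alpha><dA. \<Sum>\<gamma><dC. \<Sum>\<alpha>'<dA. \<Sum>\<gamma>'<dC. \<Sum>\<beta><dB. \<Sum>\<delta><dD. \<Sum>\<beta>'<dB. \<Sum>\<delta>'<dD.
        (a \<alpha> \<alpha>' * b \<beta> \<beta>' * Op $$ (\<alpha>'*dB+\<beta>', \<alpha>*dB+\<beta>)) * (c \<gamma> \<gamma>' * d \<delta> \<delta>' * \<tau> $$ (\<gamma>'*dD+\<delta>', \<gamma>*dD+\<delta>)))"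
    unfolding trK_def sum_split_mult by (simp add: cut_index bnd cA_idx cC_idx, simp add: mult_ac)
  also have "... = trK dB dA a b (\<lambda>r s. Op $$ (r,s)) * trK dD dC c d (\<lambda>r s. \<tau> $$ (r,s))"
    unfolding trK_def by (rule sum8_prod)
  finally show ?thesis .
qed

definition XS :: "nat \<Rightarrow> complex mat \<Rightarrow> (nat \<times> nat) set \<Rightarrow> complex mat" where
  "XS d X S = mat d d (\<lambda>p. if p \<in> S then X $$ p else 0)"

lemma eunit_carrier: "eunit d i j \<in> carrier_mat d d" unfolding eunit_def by simp

lemma lin_expand_S:
  assumes L: "lin_map d d' L" and r: "r < d'" and c: "c < d'"
  shows "finite S \<Longrightarrow> L (XS d X S) $$ (r,c) = (\<Sum>p\<in>S. X $$ p * L (eunit d (fst p) (snd p)) $$ (r,c))"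
proof (induction S rule: finite_induct)
  case empty
  have "XS d X {} = 0 \<cdot>\<^sub>m (0\<^sub>m d d)" by (rule eq_matI) (auto simp: XS_def)
  moreover have "L (0 \<cdot>\<^sub>m (0\<^sub>m d d)) = 0 \<cdot>\<^sub>m L (0\<^sub>m d d)"
    using L unfolding lin_map_def by (meson zero_carrier_mat)
  ultimately have "L (XS d X {}) = 0 \<cdot>\<^sub>m L (0\<^sub>m d d)" by simp
  moreover have "L (0\<^sub>m d d) \<in> carrier_mat d' d'" using L unfolding lin_map_def by auto
  ultimately show ?case using r c by simp
next
  case (insert p S)
  have e: "XS d X (insert p S) = XS d X S + (X $$ p) \<cdot>\<^sub>m eunit d (fst p) (snd p)"
    using insert(2) by (intro eq_matI) (auto simp: XS_def eunit_def)
  have cS: "XS d X S \<in> carrier_mat d d" by (simp add: XS_def)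
  have cE: "(X $$ p) \<cdot>\<^sub>m eunit d (fst p) (snd p) \<in> carrier_mat d d" by (simp add: eunit_carrier)
  have "L (XS d X (insert p S)) = L (XS d X S) + (X $$ p) \<cdot>\<^sub>m L (eunit d (fst p) (snd p))"
    unfolding e using L cS cE eunit_carrier unfolding lin_map_def by metis
  moreover have "L (XS d X S) \<in> carrier_mat d' d'" "L (eunit d (fst p) (snd p)) \<in> carrier_mat d' d'"
    using L cS eunit_carrier unfolding lin_map_def by auto
  ultimately show ?case using r c insert by simp
qed

lemma lin_expand:
  assumes L: "lin_map d d' L" and X: "X \<in> carrier_mat d d" and r: "r < d'" and c: "c < d'"
  shows "L X $$ (r,c) = (\<Sum>i<d. \<Sum>j<d. X $$ (i,j) * L (eunit d i j) $$ (r,c))"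
proof -
  have "XS d X ({..<d}\<times>{..<d}) = X" using X by (intro eq_matI) (auto simp: XS_def)
  hence "L X $$ (r,c) = (\<Sum>p\<in>{..<d}\<times>{..<d}. X $$ p * L (eunit d (fst p) (snd p)) $$ (r,c))"
    using lin_expand_S[OF L r c, of "{..<d}\<times>{..<d}" X] by simp
  thus ?thesis by (simp add: sum.cartesian_product case_prod_beta)
qed

lemma lin_carrier: "lin_map d d' L \<Longrightarrow> X \<in> carrier_mat d d \<Longrightarrow> L X \<in> carrier_mat d' d'"
  unfolding lin_map_def by auto

lemma cp_positive: assumes L: "cp_map d d' L" and X: "psd_op d X" shows "psd_op d' (L X)"
proof -
  have lin: "lin_map d d' L" using L cp_map_def by blast
  have cX: "X \<in> carrier_mat d d" using X psd_op_def by blast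
  have "\<forall>k X. psd_op (k*d) X \<longrightarrow> psd_op (k*d') (map_tensor k d k d' (\<lambda>Y. Y) L X)"
    using L unfolding cp_map_def by blast
  hence "psd_op (1*d) X \<longrightarrow> psd_op (1*d') (map_tensor 1 d 1 d' (\<lambda>Y. Y) L X)" by blast
  hence "psd_op (1*d') (map_tensor 1 d 1 d' (\<lambda>Y. Y) L X)" using X by simp
  moreover have "map_tensor 1 d 1 d' (\<lambda>Y. Y) L X = L X"
  proof (rule eq_matI)
    fix r c assume rc: "r < dim_row (L X)" "c < dim_col (L X)"
    hence rc': "r < d'" "c < d'" using lin_carrier[OF lin cX] by auto
    show "map_tensor 1 d 1 d' (\<lambda>Y. Y) L X $$ (r, c) = L X $$ (r, c)"
      using rc' by (simp add: map_tensor_def eunit_def lin_expand[OF lin cX])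
  qed (use lin_carrier[OF lin cX] in \<open>auto simp: map_tensor_def\<close>)
  ultimately show ?thesis by simp
qed

lemma cart2: "(\<Sum>r\<in>C. \<Sum>c\<in>D. F r c) = (\<Sum>p\<in>C\<times>D. (F (fst p) (snd p) :: 'a::comm_monoid_add))"
  by (simp add: sum.cartesian_product case_prod_beta)

lemma perm4: "(\<Sum>i\<in>A. \<Sum>j\<in>B. \<Sum>r\<in>C. \<Sum>c\<in>D. g i j r c) = (\<Sum>r\<in>C. \<Sum>c\<in>D. \<Sum>i\<in>A. \<Sum>j\<in>B. (g i j r c :: 'a::comm_monoid_add))"
proof -
  have "(\<Sum>i\<in>A. \<Sum>j\<in>B. \<Sum>r\<in>C. \<Sum>c\<in>D. g i j r c) = (\<Sum>i\<in>A. \<Sum>j\<in>B. \<Sum>p\<in>C\<times>D. g i j (fst p) (snd p))"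
    by (intro sum.cong refl cart2)
  also have "... = (\<Sum>i\<in>A. \<Sum>p\<in>C\<times>D. \<Sum>j\<in>B. g i j (fst p) (snd p))"
    by (rule sum.cong[OF refl], rule sum.swap)
  also have "... = (\<Sum>p\<in>C\<times>D. \<Sum>i\<in>A. \<Sum>j\<in>B. g i j (fst p) (snd p))"
    by (rule sum.swap)
  also have "... = (\<Sum>r\<in>C. \<Sum>c\<in>D. \<Sum>i\<in>A. \<Sum>j\<in>B. g i j r c)"
    by (rule cart2[of "\<lambda>r c. \<Sum>i\<in>A. \<Sum>j\<in>B. g i j r c", symmetric])
  finally show ?thesis .
qed

definition adj :: "nat \<Rightarrow> (complex mat \<Rightarrow> complex mat) \<Rightarrow> complex mat \<Rightarrow> complex mat" where
  "adj d L Y = mat d d (\<lambda>(i,j). \<Sum>r<d. \<Sum>c<d. Y $$ (r,c) * L (eunit d j i) $$ (c,r))"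

lemma adj_carrier: "adj d L Y \<in> carrier_mat d d" unfolding adj_def by simp

lemma adj_trace: assumes L: "lin_map d d L" and X: "X \<in> carrier_mat d d"
  shows "(\<Sum>i<d. \<Sum>j<d. adj d L Y $$ (i,j) * X $$ (j,i)) = (\<Sum>r<d. \<Sum>c<d. Y $$ (r,c) * L X $$ (c,r))"
proof -
  have "(\<Sum>i<d. \<Sum>j<d. adj d L Y $$ (i,j) * X $$ (j,i)) = (\<Sum>i<d. \<Sum>j<d. \<Sum>r<d. \<Sum>c<d. Y $$ (r,c) * (X $$ (j,i) * L (eunit d j i) $$ (c,r)))"
    by (simp add: adj_def sum_distrib_left sum_distrib_right mult_ac)
  also have "... = (\<Sum>r<d. \<Sum>c<d. \<Sum>i<d. \<Sum>j<d. Y $$ (r,c) * (X $$ (j,i) * L (eunit d j i) $$ (c,r)))"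
    by (rule perm4)
  also have "... = (\<Sum>r<d. \<Sum>c<d. \<Sum>j<d. \<Sum>i<d. Y $$ (r,c) * (X $$ (j,i) * L (eunit d j i) $$ (c,r)))"
    by (intro sum.cong refl sum.swap)
  also have "... = (\<Sum>r<d. \<Sum>c<d. Y $$ (r,c) * L X $$ (c,r))"
    by (simp add: lin_expand[OF L X] sum_distrib_left)
  finally show ?thesis .
qed

lemma psdf_outer: "psdf n (\<lambda>i j. v i * cnj (v j))"
  unfolding psdf_def qff_rank1 by (intro allI cnonneg_cnj_mult)

lemma psd_op_outer: "psd_op n (mat n n (\<lambda>(i,j). v i * cnj (v j)))"
proof -
  have "qff n (\<lambda>i j. mat n n (\<lambda>(i,j). v i * cnj (v j)) $$ (i,j)) w = qff n (\<lambda>i j. v i * cnj (v j)) w" for w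
    by (rule qff_cong) auto
  thus ?thesis using psdf_outer unfolding psd_op_psdf psdf_def by simp
qed

lemma adj_psd: assumes L: "cp_map d d L" and Y: "psd_op d Y" shows "psd_op d (adj d L Y)"
proof -
  have lin: "lin_map d d L" using L cp_map_def by blast
  have cY: "Y \<in> carrier_mat d d" and pY: "psdf d (\<lambda>i j. Y $$ (i,j))" using Y psd_op_psdf by auto
  have "cnonneg (qff d (\<lambda>i j. adj d L Y $$ (i,j)) v)" for v
  proof -
    define X where "X = mat d d (\<lambda>(i,j). v i * cnj (v j))"
    have pX: "psd_op d X" unfolding X_def by (rule psd_op_outer)
    have cX: "X \<in> carrier_mat d d" unfolding X_def by simp
    have pLX: "psdf d (\<lambda>i j. L X $$ (i,j))" using cp_positive[OF L pX] psd_op_psdf by auto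
    have "qff d (\<lambda>i j. adj d L Y $$ (i,j)) v = (\<Sum>i<d. \<Sum>j<d. adj d L Y $$ (i,j) * X $$ (j,i))"
      unfolding qff_def X_def by (intro sum.cong refl) (simp add: mult_ac)
    also have "... = (\<Sum>r<d. \<Sum>c<d. Y $$ (r,c) * L X $$ (c,r))" by (rule adj_trace[OF lin cX])
    finally show ?thesis using psdf_trace[OF pY pLX] by simp
  qed
  thus ?thesis using adj_carrier psd_op_psdf psdf_def by blast
qed

lemma adj_sum: assumes "\<And>r c. r < d \<Longrightarrow> c < d \<Longrightarrow> (\<Sum>a<n. M a $$ (r,c)) = Z $$ (r,c)"
  and "i < d" "j < d"
  shows "(\<Sum>a<n. adj d L (M a) $$ (i,j)) = adj d L Z $$ (i,j)"
proof -
  have "(\<Sum>a<n. adj d L (M a) $$ (i,j)) = (\<Sum>r<d. \<Sum>c<d. \<Sum>a<n. M a $$ (r,c) * L (eunit d j i) $$ (c,r))"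
    using assms(2,3) by (simp add: adj_def sum.swap[of _ "{..<n}"])
  also have "... = adj d L Z $$ (i,j)"
    using assms by (simp add: adj_def sum_distrib_right[symmetric])
  finally show ?thesis .
qed

lemma sum_ind: fixes f :: "nat \<Rightarrow> complex" shows "finite S \<Longrightarrow> (\<Sum>c\<in>S. (if r = c then 1 else 0) * f c) = (if r \<in> S then f r else 0)"
proof -
  have "(\<Sum>c\<in>S. (if r = c then 1 else 0) * f c) = (\<Sum>c\<in>S. if r = c then f c else 0)"
    by (rule sum.cong) auto
  moreover assume "finite S"
  ultimately show ?thesis by (simp add: sum.delta)
qed

lemma adj_one: assumes I: "instrument d m L" and ij: "i < d" "j < d"
  shows "(\<Sum>x<m. adj d (L x) (1\<^sub>m d) $$ (i,j)) = (1\<^sub>m d :: complex mat) $$ (i,j)"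
proof -
  have lin: "lin_map d d (L x)" if "x < m" for x using I that unfolding instrument_def cp_map_def by blast
  have "adj d (L x) (1\<^sub>m d) $$ (i,j) = mtrace (L x (eunit d j i))" if "x < m" for x
  proof -
    have c: "L x (eunit d j i) \<in> carrier_mat d d" using lin[OF that] eunit_carrier lin_carrier by blast
    have "adj d (L x) (1\<^sub>m d) $$ (i,j) = (\<Sum>r<d. \<Sum>c<d. (if r = c then 1 else 0) * L x (eunit d j i) $$ (c,r))"
      using ij by (simp add: adj_def)
    also have "... = (\<Sum>r<d. L x (eunit d j i) $$ (r,r))"
      by (rule sum.cong[OF refl]) (simp add: sum_ind)
    finally show ?thesis using c by (simp add: mtrace_def)
  qed
  hence "(\<Sum>x<m. adj d (L x) (1\<^sub>m d) $$ (i,j)) = (\<Sum>x<m. mtrace (L x (eunit d j i)))" by simp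
  also have "... = mtrace (eunit d j i)" using I eunit_carrier unfolding instrument_def by blast
  also have "... = (1\<^sub>m d :: complex mat) $$ (i,j)" using ij
  proof (cases "i = j")
    case True thus ?thesis using ij by (simp add: mtrace_def eunit_def sum.delta')
  next
    case False
    hence "(\<Sum>t<d. (if t = j \<and> t = i then 1 else 0::complex)) = 0" by (intro sum.neutral) auto
    thus ?thesis using ij False by (simp add: mtrace_def eunit_def)
  qed
  finally show ?thesis .
qed

definition Mp :: "nat \<Rightarrow> nat \<Rightarrow> nat \<Rightarrow> nat \<Rightarrow> (nat \<Rightarrow> nat \<Rightarrow> complex mat) \<Rightarrow> (nat \<Rightarrow> complex mat \<Rightarrow> complex mat)
   \<Rightarrow> (nat \<Rightarrow> nat \<Rightarrow> complex mat) \<Rightarrow> complex mat" where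
  "Mp dA dC nA mX M L Y = mat (dA*dC) (dA*dC) (\<lambda>(R,R'). \<Sum>a<nA. \<Sum>x<mX.
      M x a $$ (R div dC, R' div dC) * adj dC (L x) (Y a x) $$ (R mod dC, R' mod dC))"

lemma Mp_carrier: "Mp dA dC nA mX M L Y \<in> carrier_mat (dA*dC) (dA*dC)" unfolding Mp_def by simp

lemma Mp_psd: assumes M: "\<And>x a. x < mX \<Longrightarrow> a < nA \<Longrightarrow> psd_op dA (M x a)"
  and L: "\<And>x. x < mX \<Longrightarrow> cp_map dC dC (L x)"
  and Y: "\<And>a x. a < nA \<Longrightarrow> x < mX \<Longrightarrow> psd_op dC (Y a x)"
  shows "psd_op (dA*dC) (Mp dA dC nA mX M L Y)"
proof -
  have tm: "psdf (dA*dC) (\<lambda>R R'. M x a $$ (R div dC, R' div dC) * adj dC (L x) (Y a x) $$ (R mod dC, R' mod dC))"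
    if "a < nA" "x < mX" for a x
  proof -
    have pA: "psdf dA (\<lambda>i j. M x a $$ (i,j))" using M[OF that(2,1)] psd_op_psdf by auto
    have pB: "psdf dC (\<lambda>i j. adj dC (L x) (Y a x) $$ (i,j))" using adj_psd[OF L Y] that psd_op_psdf by auto
    have p1: "psdf (dA*dC) (\<lambda>r c. M x a $$ (r div dC, c div dC))"
      by (rule psdf_pullback[OF pA, of _ "\<lambda>r. r div dC", simplified]) (simp add: div_bound)
    have p2: "psdf (dA*dC) (\<lambda>r c. adj dC (L x) (Y a x) $$ (r mod dC, c mod dC))"
      by (rule psdf_pullback[OF pB, of _ "\<lambda>r. r mod dC", simplified]) (simp add: mod_bound)
    show ?thesis by (rule psdf_schur[OF p1 p2])
  qed
  have "psdf (dA*dC) (\<lambda>R R'. \<Sum>a<nA. \<Sum>x<mX. M x a $$ (R div dC, R' div dC) * adj dC (L x) (Y a x) $$ (R mod dC, R' mod dC))"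
    using tm by (intro psdf_sum) simp
  moreover have "qff (dA*dC) (\<lambda>R R'. \<Sum>a<nA. \<Sum>x<mX. M x a $$ (R div dC, R' div dC) * adj dC (L x) (Y a x) $$ (R mod dC, R' mod dC)) v
     = qff (dA*dC) (\<lambda>i j. Mp dA dC nA mX M L Y $$ (i,j)) v" for v
    by (rule qff_cong) (auto simp: Mp_def)
  ultimately have "psdf (dA*dC) (\<lambda>i j. Mp dA dC nA mX M L Y $$ (i,j))" unfolding psdf_def by simp
  thus ?thesis using Mp_carrier psd_op_psdf by blast
qed

lemma Mp_povm:
  assumes M: "\<forall>x<mX. povm dA nA (M x)" and I: "instrument dC mX L"
    and Y: "\<forall>a<nA. \<forall>x<mX. povm dC n' (\<lambda>a'. Y a' a x)"
  shows "povm (dA*dC) n' (\<lambda>a'. Mp dA dC nA mX M L (Y a'))"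
  unfolding povm_def
proof (intro conjI allI impI)
  fix a' assume "a' < n'"
  show "psd_op (dA*dC) (Mp dA dC nA mX M L (Y a'))"
    by (rule Mp_psd) (use M I Y \<open>a' < n'\<close> in \<open>auto simp: povm_def instrument_def\<close>)
next
  fix R R' assume R: "R < dA*dC" and R': "R' < dA*dC"
  have dR: "R div dC < dA" "R' div dC < dA" "R mod dC < dC" "R' mod dC < dC"
    using R R' div_bound mod_bound by auto
  have "(\<Sum>a'<n'. Mp dA dC nA mX M L (Y a') $$ (R,R')) =
     (\<Sum>a'<n'. \<Sum>a<nA. \<Sum>x<mX. M x a $$ (R div dC, R' div dC) * adj dC (L x) (Y a' a x) $$ (R mod dC, R' mod dC))"
    using R R' by (simp add: Mp_def)
  also have "... = (\<Sum>a<nA. \<Sum>a'<n'. \<Sum>x<mX. M x a $$ (R div dC, R' div dC) * adj dC (L x) (Y a' a x) $$ (R mod dC, R' mod dC))"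
    by (rule sum.swap)
  also have "... = (\<Sum>a<nA. \<Sum>x<mX. \<Sum>a'<n'. M x a $$ (R div dC, R' div dC) * adj dC (L x) (Y a' a x) $$ (R mod dC, R' mod dC))"
    by (intro sum.cong refl sum.swap)
  also have "... = (\<Sum>a<nA. \<Sum>x<mX. M x a $$ (R div dC, R' div dC) * adj dC (L x) (1\<^sub>m dC) $$ (R mod dC, R' mod dC))"
  proof (intro sum.cong refl)
    fix a x assume "a \<in> {..<nA}" "x \<in> {..<mX}"
    hence "(\<Sum>a'<n'. adj dC (L x) (Y a' a x) $$ (R mod dC, R' mod dC)) = adj dC (L x) (1\<^sub>m dC) $$ (R mod dC, R' mod dC)"
      using Y dR by (intro adj_sum) (auto simp: povm_def)
    thus "(\<Sum>a'<n'. M x a $$ (R div dC, R' div dC) * adj dC (L x) (Y a' a x) $$ (R mod dC, R' mod dC)) =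
        M x a $$ (R div dC, R' div dC) * adj dC (L x) (1\<^sub>m dC) $$ (R mod dC, R' mod dC)"
      by (simp add: sum_distrib_left[symmetric])
  qed
  also have "... = (\<Sum>x<mX. (\<Sum>a<nA. M x a $$ (R div dC, R' div dC)) * adj dC (L x) (1\<^sub>m dC) $$ (R mod dC, R' mod dC))"
    unfolding sum_distrib_right by (rule sum.swap)
  also have "... = (\<Sum>x<mX. (1\<^sub>m dA :: complex mat) $$ (R div dC, R' div dC) * adj dC (L x) (1\<^sub>m dC) $$ (R mod dC, R' mod dC))"
    using M dR by (intro sum.cong refl) (auto simp: povm_def)
  also have "... = (1\<^sub>m dA :: complex mat) $$ (R div dC, R' div dC) * (1\<^sub>m dC :: complex mat) $$ (R mod dC, R' mod dC)"
    using adj_one[OF I dR(3,4)] by (simp add: sum_distrib_left[symmetric])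
  also have "... = (1\<^sub>m (dA*dC) :: complex mat) $$ (R,R')"
  proof (cases "R = R'")
    case True thus ?thesis using R dR by simp
  next
    case False
    hence "R div dC \<noteq> R' div dC \<or> R mod dC \<noteq> R' mod dC" by (metis div_mult_mod_eq)
    thus ?thesis using R R' dR False by auto
  qed
  finally show "(\<Sum>a'<n'. Mp dA dC nA mX M L (Y a') $$ (R,R')) = (1\<^sub>m (dA*dC) :: complex mat) $$ (R,R')" .
qed

lemma cart4: "(\<Sum>i\<in>A. \<Sum>j\<in>B. \<Sum>k\<in>C. \<Sum>l\<in>D. f i j k l) =
  (\<Sum>z\<in>A\<times>B\<times>C\<times>D. (f (fst z) (fst (snd z)) (fst (snd (snd z))) (snd (snd (snd z))) :: 'a::comm_monoid_add))"
  by (simp add: sum.cartesian_product case_prod_beta)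

lemma perm8: "(\<Sum>i\<in>A. \<Sum>j\<in>B. \<Sum>k\<in>C. \<Sum>l\<in>D. \<Sum>p\<in>E. \<Sum>q\<in>F. \<Sum>s\<in>G. \<Sum>t\<in>H. g i j k l p q s t) =
  (\<Sum>p\<in>E. \<Sum>q\<in>F. \<Sum>s\<in>G. \<Sum>t\<in>H. \<Sum>i\<in>A. \<Sum>j\<in>B. \<Sum>k\<in>C. \<Sum>l\<in>D. (g i j k l p q s t :: 'a::comm_monoid_add))"
proof -
  let ?P = "E\<times>F\<times>G\<times>H"
  have "(\<Sum>i\<in>A. \<Sum>j\<in>B. \<Sum>k\<in>C. \<Sum>l\<in>D. \<Sum>p\<in>E. \<Sum>q\<in>F. \<Sum>s\<in>G. \<Sum>t\<in>H. g i j k l p q s t) =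
    (\<Sum>i\<in>A. \<Sum>j\<in>B. \<Sum>k\<in>C. \<Sum>l\<in>D. \<Sum>z\<in>?P. g i j k l (fst z) (fst (snd z)) (fst (snd (snd z))) (snd (snd (snd z))))"
    by (simp add: sum.cartesian_product case_prod_beta)
  also have "... = (\<Sum>z\<in>?P. \<Sum>i\<in>A. \<Sum>j\<in>B. \<Sum>k\<in>C. \<Sum>l\<in>D. g i j k l (fst z) (fst (snd z)) (fst (snd (snd z))) (snd (snd (snd z))))"
    by (rule swap_out4)
  also have "... = (\<Sum>p\<in>E. \<Sum>q\<in>F. \<Sum>s\<in>G. \<Sum>t\<in>H. \<Sum>i\<in>A. \<Sum>j\<in>B. \<Sum>k\<in>C. \<Sum>l\<in>D. g i j k l p q s t)"
    by (rule cart4[of "\<lambda>p q s t. \<Sum>i\<in>A. \<Sum>j\<in>B. \<Sum>k\<in>C. \<Sum>l\<in>D. g i j k l p q s t", symmetric])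
  finally show ?thesis .
qed


lemma map_tensor_carrier: "map_tensor d1 d2 d1' d2' L1 L2 X \<in> carrier_mat (d1'*d2') (d1'*d2')"
  unfolding map_tensor_def by simp

lemma trace_map_tensor:
  assumes LA: "lin_map dC dC LA" and LB: "lin_map dD dD LB"
    and M2: "M2 \<in> carrier_mat dC dC" and N2: "N2 \<in> carrier_mat dD dD" and T: "\<tau> \<in> carrier_mat (dC*dD) (dC*dD)"
  shows "mtrace (kron M2 N2 * map_tensor dC dD dC dD LA LB \<tau>) = mtrace (kron (adj dC LA M2) (adj dD LB N2) * \<tau>)"
proof -
  let ?MT = "map_tensor dC dD dC dD LA LB \<tau>"
  let ?f = "\<lambda>i j k l p q s t. (M2 $$ (i,j) * N2 $$ (k,l)) * (\<tau> $$ (p*dD+s, q*dD+t) * LA (eunit dC p q) $$ (j,i) * LB (eunit dD s t) $$ (l,k))"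
  have "mtrace (kron M2 N2 * ?MT) = trK dD dC (\<lambda>i j. M2 $$ (i,j)) (\<lambda>k l. N2 $$ (k,l)) (\<lambda>r c. ?MT $$ (r,c))"
    by (rule trace_kron_gen[OF M2 N2 map_tensor_carrier])
  also have "... = (\<Sum>i<dC. \<Sum>j<dC. \<Sum>k<dD. \<Sum>l<dD. \<Sum>p<dC. \<Sum>q<dC. \<Sum>s<dD. \<Sum>t<dD. ?f i j k l p q s t)"
    unfolding trK_def by (simp add: map_tensor_def idx_bound sum_distrib_left)
  also have "... = (\<Sum>p<dC. \<Sum>q<dC. \<Sum>s<dD. \<Sum>t<dD. \<Sum>i<dC. \<Sum>j<dC. \<Sum>k<dD. \<Sum>l<dD. ?f i j k l p q s t)"
    by (rule perm8)
  also have "... = (\<Sum>p<dC. \<Sum>q<dC. \<Sum>s<dD. \<Sum>t<dD. \<tau> $$ (p*dD+s, q*dD+t) *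
        (\<Sum>i<dC. \<Sum>j<dC. M2 $$ (i,j) * LA (eunit dC p q) $$ (j,i)) * (\<Sum>k<dD. \<Sum>l<dD. N2 $$ (k,l) * LB (eunit dD s t) $$ (l,k)))"
    by (intro sum.cong refl) (simp add: sum_distrib_left sum_distrib_right mult_ac)
  also have "... = (\<Sum>p<dC. \<Sum>q<dC. \<Sum>s<dD. \<Sum>t<dD. adj dC LA M2 $$ (q,p) * adj dD LB N2 $$ (t,s) * \<tau> $$ (p*dD+s, q*dD+t))"
    by (intro sum.cong refl) (simp add: adj_def mult_ac)
  also have "... = (\<Sum>q<dC. \<Sum>p<dC. \<Sum>t<dD. \<Sum>s<dD. adj dC LA M2 $$ (q,p) * adj dD LB N2 $$ (t,s) * \<tau> $$ (p*dD+s, q*dD+t))"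
    by (subst sum.swap) (intro sum.cong refl sum.swap)
  also have "... = trK dD dC (\<lambda>i j. adj dC LA M2 $$ (i,j)) (\<lambda>k l. adj dD LB N2 $$ (k,l)) (\<lambda>r c. \<tau> $$ (r,c))"
    unfolding trK_def ..
  also have "... = mtrace (kron (adj dC LA M2) (adj dD LB N2) * \<tau>)"
    by (rule trace_kron_gen[symmetric, OF adj_carrier adj_carrier T])
  finally show ?thesis .
qed

definition Tbox :: "nat \<Rightarrow> nat \<Rightarrow> nat \<Rightarrow> nat \<Rightarrow> nat \<Rightarrow> nat \<Rightarrow> complex mat \<Rightarrow>
   (nat \<Rightarrow> nat \<Rightarrow> complex mat \<Rightarrow> complex mat) \<Rightarrow> (nat \<Rightarrow> nat \<Rightarrow> complex mat \<Rightarrow> complex mat) \<Rightarrow>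
   (nat \<Rightarrow> nat \<Rightarrow> nat \<Rightarrow> nat \<Rightarrow> complex mat) \<Rightarrow> (nat \<Rightarrow> nat \<Rightarrow> nat \<Rightarrow> nat \<Rightarrow> complex mat) \<Rightarrow>
   (nat \<Rightarrow> nat \<Rightarrow> nat \<Rightarrow> nat \<Rightarrow> real) \<Rightarrow> (nat \<Rightarrow> nat \<Rightarrow> nat \<Rightarrow> nat \<Rightarrow> real)" where
  "Tbox nA nB mX mY dC dD \<tau> \<Lambda> \<Gamma> M2 N2 w = (\<lambda>a' b' x' y'. \<Sum>a<nA. \<Sum>b<nB. \<Sum>x<mX. \<Sum>y<mY.
          Re (mtrace (kron (M2 a' a x x') (N2 b' b y y') *
                      map_tensor dC dD dC dD (\<Lambda> x x') (\<Gamma> y y') \<tau>)) * w a b x y)"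

lemma sum_pair: "(\<Sum>s\<in>A\<times>B. f s) = (\<Sum>a\<in>A. \<Sum>b\<in>B. f (a,b))"
  by (simp add: sum.cartesian_product)

lemma trK_cong: "(\<And>i j. i < n \<Longrightarrow> j < n \<Longrightarrow> p i j = p' i j) \<Longrightarrow> (\<And>k l. k < m \<Longrightarrow> l < m \<Longrightarrow> q k l = q' k l)
   \<Longrightarrow> trK m n p q X = trK m n p' q' X"
  unfolding trK_def by (intro sum.cong refl) auto

lemma povm_carrier: "povm d n M \<Longrightarrow> a < n \<Longrightarrow> M a \<in> carrier_mat d d"
  unfolding povm_def psd_op_def by blast

lemma inst_lin: "instrument d n L \<Longrightarrow> x < n \<Longrightarrow> lin_map d d (L x)"
  unfolding instrument_def cp_map_def by blast
lemma inst_cp: "instrument d n L \<Longrightarrow> x < n \<Longrightarrow> cp_map d d (L x)"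
  unfolding instrument_def by blast

lemma coef_real:
  assumes instA: "instrument dC mX (\<lambda>x. \<Lambda> x x')" and instB: "instrument dD mY (\<lambda>y. \<Gamma> y y')"
    and pM: "psd_op dC M2" and pN: "psd_op dD N2" and T: "psd_op (dC*dD) \<tau>" and x: "x < mX" and y: "y < mY"
  shows "mtrace (kron M2 N2 * map_tensor dC dD dC dD (\<Lambda> x x') (\<Gamma> y y') \<tau>)
       = mtrace (kron (adj dC (\<Lambda> x x') M2) (adj dD (\<Gamma> y y') N2) * \<tau>)"
    and "cnonneg (mtrace (kron (adj dC (\<Lambda> x x') M2) (adj dD (\<Gamma> y y') N2) * \<tau>))"
proof -
  have cT: "\<tau> \<in> carrier_mat (dC*dD) (dC*dD)" using T psd_op_def by blast
  show "mtrace (kron M2 N2 * map_tensor dC dD dC dD (\<Lambda> x x') (\<Gamma> y y') \<tau>)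
       = mtrace (kron (adj dC (\<Lambda> x x') M2) (adj dD (\<Gamma> y y') N2) * \<tau>)"
    using pM pN by (intro trace_map_tensor inst_lin[OF instA x, simplified] inst_lin[OF instB y, simplified] cT)
      (auto simp: psd_op_def)
  have pK: "psd_op (dC*dD) (kron (adj dC (\<Lambda> x x') M2) (adj dD (\<Gamma> y y') N2))"
    by (intro psd_kron adj_psd inst_cp[OF instA x, simplified] inst_cp[OF instB y, simplified] pM pN)
  have "cnonneg (\<Sum>i<dC*dD. \<Sum>j<dC*dD. kron (adj dC (\<Lambda> x x') M2) (adj dD (\<Gamma> y y') N2) $$ (i,j) * \<tau> $$ (j,i))"
    using pK T psd_op_psdf psdf_trace by blast
  thus "cnonneg (mtrace (kron (adj dC (\<Lambda> x x') M2) (adj dD (\<Gamma> y y') N2) * \<tau>))"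
    using mtrace_mult[OF kron_carrier[OF adj_carrier adj_carrier] cT] by simp
qed


lemma produces_T:
  assumes P: "produces nA nB mX mY dA dB Op w" and cO: "Op \<in> carrier_mat (dA*dB) (dA*dB)"
    and T: "psd_op (dC*dD) \<tau>"
    and instA: "\<forall>x'<mX'. instrument dC mX (\<lambda>x. \<Lambda> x x')"
    and instB: "\<forall>y'<mY'. instrument dD mY (\<lambda>y. \<Gamma> y y')"
    and povmA: "\<forall>a<nA. \<forall>x<mX. \<forall>x'<mX'. povm dC nA' (\<lambda>a'. M2 a' a x x')"
    and povmB: "\<forall>b<nB. \<forall>y<mY. \<forall>y'<mY'. povm dD nB' (\<lambda>b'. N2 b' b y y')"
  shows "produces nA' nB' mX' mY' (dA*dC) (dB*dD) (cut_tensor dA dB dC dD Op \<tau>)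
           (Tbox nA nB mX mY dC dD \<tau> \<Lambda> \<Gamma> M2 N2 w)"
proof -
  obtain M N where M: "\<forall>x<mX. povm dA nA (M x)" and N: "\<forall>y<mY. povm dB nB (N y)"
    and MN: "\<forall>a<nA. \<forall>b<nB. \<forall>x<mX. \<forall>y<mY. complex_of_real (w a b x y) = mtrace (kron (M x a) (N y b) * Op)"
    using P unfolding produces_def by blast
  have cT: "\<tau> \<in> carrier_mat (dC*dD) (dC*dD)" using T psd_op_def by blast
  define M' where "M' x' a' = Mp dA dC nA mX M (\<lambda>x. \<Lambda> x x') (\<lambda>a x. M2 a' a x x')" for x' a'
  define N' where "N' y' b' = Mp dB dD nB mY N (\<lambda>y. \<Gamma> y y') (\<lambda>b y. N2 b' b y y')" for y' b'
  have pM': "\<forall>x'<mX'. povm (dA*dC) nA' (M' x')"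
    unfolding M'_def using M instA povmA by (auto intro!: Mp_povm)
  have pN': "\<forall>y'<mY'. povm (dB*dD) nB' (N' y')"
    unfolding N'_def using N instB povmB by (auto intro!: Mp_povm)
  have eq: "complex_of_real (Tbox nA nB mX mY dC dD \<tau> \<Lambda> \<Gamma> M2 N2 w a' b' x' y')
       = mtrace (kron (M' x' a') (N' y' b') * cut_tensor dA dB dC dD Op \<tau>)"
    if a': "a' < nA'" and b': "b' < nB'" and x': "x' < mX'" and y': "y' < mY'" for a' b' x' y'
  proof -
    let ?SA = "{..<nA} \<times> {..<mX}" and ?SB = "{..<nB} \<times> {..<mY}"
    define fa where "fa s = (\<lambda>i j. M (snd s) (fst s) $$ (i,j))" for s :: "nat \<times> nat"
    define fc where "fc s = (\<lambda>i j. adj dC (\<Lambda> (snd s) x') (M2 a' (fst s) (snd s) x') $$ (i,j))" for s :: "nat \<times> nat"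
    define fb where "fb t = (\<lambda>i j. N (snd t) (fst t) $$ (i,j))" for t :: "nat \<times> nat"
    define fd where "fd t = (\<lambda>i j. adj dD (\<Gamma> (snd t) y') (N2 b' (fst t) (snd t) y') $$ (i,j))" for t :: "nat \<times> nat"
    define Z where "Z a b x y = mtrace (kron (adj dC (\<Lambda> x x') (M2 a' a x x')) (adj dD (\<Gamma> y y') (N2 b' b y y')) * \<tau>)" for a b x y
    have iA: "instrument dC mX (\<lambda>x. \<Lambda> x x')" using instA x' by blast
    have iB: "instrument dD mY (\<lambda>y. \<Gamma> y y')" using instB y' by blast
    have psM2: "psd_op dC (M2 a' a x x')" if "a < nA" "x < mX" for a x
      using povmA that x' a' unfolding povm_def by blast
    have psN2: "psd_op dD (N2 b' b y y')" if "b < nB" "y < mY" for b y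
      using povmB that y' b' unfolding povm_def by blast
    have Zeq: "mtrace (kron (M2 a' a x x') (N2 b' b y y') * map_tensor dC dD dC dD (\<Lambda> x x') (\<Gamma> y y') \<tau>) = Z a b x y"
      and Zr: "cnonneg (Z a b x y)"
      if "a < nA" "x < mX" "b < nB" "y < mY" for a b x y
      using coef_real[where \<Lambda>=\<Lambda> and x'=x' and \<Gamma>=\<Gamma> and y'=y', OF iA iB psM2[OF that(1,2)] psN2[OF that(3,4)] T that(2,4)] unfolding Z_def by auto
    have "mtrace (kron (M' x' a') (N' y' b') * cut_tensor dA dB dC dD Op \<tau>) =
       trK (dB*dD) (dA*dC) (\<lambda>i j. M' x' a' $$ (i,j)) (\<lambda>k l. N' y' b' $$ (k,l)) (\<lambda>r c. cut_tensor dA dB dC dD Op \<tau> $$ (r,c))"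
      by (rule trace_kron_gen[OF _ _ cut_carrier]) (auto simp: M'_def N'_def Mp_carrier)
    also have "... = trK (dB*dD) (dA*dC) (\<lambda>R R'. \<Sum>s\<in>?SA. fa s (R div dC) (R' div dC) * fc s (R mod dC) (R' mod dC))
        (\<lambda>S S'. \<Sum>t\<in>?SB. fb t (S div dD) (S' div dD) * fd t (S mod dD) (S' mod dD)) (\<lambda>r c. cut_tensor dA dB dC dD Op \<tau> $$ (r,c))"
      by (rule trK_cong) (simp_all add: M'_def N'_def Mp_def fa_def fb_def fc_def fd_def sum.cartesian_product case_prod_beta)
    also have "... = (\<Sum>s\<in>?SA. \<Sum>t\<in>?SB. trK dB dA (fa s) (fb t) (\<lambda>r c. Op $$ (r,c)) * trK dD dC (fc s) (fd t) (\<lambda>r c. \<tau> $$ (r,c)))"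
      unfolding trK_sum using cut_single[OF cO cT] by simp
    also have "... = (\<Sum>s\<in>?SA. \<Sum>t\<in>?SB. complex_of_real (w (fst s) (fst t) (snd s) (snd t)) * Z (fst s) (fst t) (snd s) (snd t))"
    proof (intro sum.cong refl)
      fix s t assume s: "s \<in> ?SA" and t: "t \<in> ?SB"
      have c1: "M (snd s) (fst s) \<in> carrier_mat dA dA" using M s povm_carrier by auto
      have c2: "N (snd t) (fst t) \<in> carrier_mat dB dB" using N t povm_carrier by auto
      have "trK dB dA (fa s) (fb t) (\<lambda>r c. Op $$ (r,c)) = mtrace (kron (M (snd s) (fst s)) (N (snd t) (fst t)) * Op)"
        unfolding fa_def fb_def by (rule trace_kron_gen[OF c1 c2 cO, symmetric])
      also have "... = complex_of_real (w (fst s) (fst t) (snd s) (snd t))" using MN s t by auto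
      finally have e1: "trK dB dA (fa s) (fb t) (\<lambda>r c. Op $$ (r,c)) = complex_of_real (w (fst s) (fst t) (snd s) (snd t))" .
      have "trK dD dC (fc s) (fd t) (\<lambda>r c. \<tau> $$ (r,c)) = Z (fst s) (fst t) (snd s) (snd t)"
        unfolding fc_def fd_def Z_def by (rule trace_kron_gen[OF adj_carrier adj_carrier cT, symmetric])
      thus "trK dB dA (fa s) (fb t) (\<lambda>r c. Op $$ (r,c)) * trK dD dC (fc s) (fd t) (\<lambda>r c. \<tau> $$ (r,c)) =
         complex_of_real (w (fst s) (fst t) (snd s) (snd t)) * Z (fst s) (fst t) (snd s) (snd t)" using e1 by simp
    qed
    also have "... = (\<Sum>a<nA. \<Sum>x<mX. \<Sum>b<nB. \<Sum>y<mY. complex_of_real (w a b x y) * Z a b x y)"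
      unfolding sum_pair by simp
    also have "... = (\<Sum>a<nA. \<Sum>b<nB. \<Sum>x<mX. \<Sum>y<mY. complex_of_real (w a b x y) * Z a b x y)"
      by (intro sum.cong refl sum.swap)
    also have "... = (\<Sum>a<nA. \<Sum>b<nB. \<Sum>x<mX. \<Sum>y<mY. complex_of_real (Re (Z a b x y) * w a b x y))"
    proof (intro sum.cong refl)
      fix a b x y assume "a \<in> {..<nA}" "b \<in> {..<nB}" "x \<in> {..<mX}" "y \<in> {..<mY}"
      hence "cnonneg (Z a b x y)" using Zr by auto
      hence "Z a b x y = complex_of_real (Re (Z a b x y))" by (rule cnonneg_real)
      thus "complex_of_real (w a b x y) * Z a b x y = complex_of_real (Re (Z a b x y) * w a b x y)"
        by (metis mult.commute of_real_mult)
    qed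
    also have "... = complex_of_real (Tbox nA nB mX mY dC dD \<tau> \<Lambda> \<Gamma> M2 N2 w a' b' x' y')"
    proof -
      have "(\<Sum>a<nA. \<Sum>b<nB. \<Sum>x<mX. \<Sum>y<mY. Re (Z a b x y) * w a b x y) = Tbox nA nB mX mY dC dD \<tau> \<Lambda> \<Gamma> M2 N2 w a' b' x' y'"
        unfolding Tbox_def by (intro sum.cong refl) (simp add: Zeq)
      hence "complex_of_real (\<Sum>a<nA. \<Sum>b<nB. \<Sum>x<mX. \<Sum>y<mY. Re (Z a b x y) * w a b x y) = complex_of_real (Tbox nA nB mX mY dC dD \<tau> \<Lambda> \<Gamma> M2 N2 w a' b' x' y')"
        by simp
      thus ?thesis by (simp only: of_real_sum)
    qed
    finally show ?thesis by simp
  qed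
  show ?thesis unfolding produces_def using pM' pN' eq by blast
qed

lemma trK_sumX: "trK m n p q (\<lambda>r c. \<Sum>j\<in>S. f j r c) = (\<Sum>j\<in>S. trK m n p q (f j))"
proof -
  have "trK m n p q (\<lambda>r c. \<Sum>j\<in>S. f j r c) = (\<Sum>i<n. \<Sum>j<n. \<Sum>k<m. \<Sum>l<m. \<Sum>s\<in>S. p i j * q k l * f s (j*m+l) (i*m+k))"
    unfolding trK_def by (simp only: sum_distrib_left)
  also have "... = (\<Sum>s\<in>S. trK m n p q (f s))" unfolding trK_def by (rule swap_out4)
  finally show ?thesis .
qed

lemma trK_scaleX: "trK m n p q (\<lambda>r c. z * f r c) = z * trK m n p q f"
  unfolding trK_def by (simp add: sum_distrib_left mult_ac)

lemma trK_congX: "(\<And>r c. r < n*m \<Longrightarrow> c < n*m \<Longrightarrow> X r c = X' r c) \<Longrightarrow> trK m n p q X = trK m n p q X'"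
  unfolding trK_def by (intro sum.cong refl) (simp add: idx_bound)

lemma kron_index2: "A \<in> carrier_mat n n \<Longrightarrow> B \<in> carrier_mat m m \<Longrightarrow> i < n \<Longrightarrow> j < n \<Longrightarrow> k < m \<Longrightarrow> l < m
  \<Longrightarrow> kron A B $$ (i * m + k, j * m + l) = A $$ (i, j) * B $$ (k, l)"
  apply (subst kron_index)
  apply assumption+
  apply (rule idx_bound, assumption+)
  apply (rule idx_bound, assumption+)
  apply simp
  done

lemma trK_kron: assumes A: "A \<in> carrier_mat n n" and B: "B \<in> carrier_mat m m"
  shows "trK m n p q (\<lambda>r c. kron A B $$ (r,c)) = (\<Sum>i<n. \<Sum>j<n. p i j * A $$ (j,i)) * (\<Sum>k<m. \<Sum>l<m. q k l * B $$ (l,k))"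
proof -
  have "trK m n p q (\<lambda>r c. kron A B $$ (r,c)) = (\<Sum>i<n. \<Sum>j<n. \<Sum>k<m. \<Sum>l<m. (p i j * A $$ (j,i)) * (q k l * B $$ (l,k)))"
    unfolding trK_def using A B by (intro sum.cong refl) (simp add: kron_index2)
  also have "... = (\<Sum>i<n. \<Sum>j<n. p i j * A $$ (j,i)) * (\<Sum>k<m. \<Sum>l<m. q k l * B $$ (l,k))"
    by (simp only: sum_distrib_right, simp only: sum_distrib_left)
  finally show ?thesis .
qed

definition trm :: "nat \<Rightarrow> complex mat \<Rightarrow> complex mat \<Rightarrow> complex" where
  "trm d A B = (\<Sum>i<d. \<Sum>j<d. A $$ (i,j) * B $$ (j,i))"

lemma coef_sep:
  assumes LA: "lin_map dC dC LA" and LB: "lin_map dD dD LB"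
    and sC: "\<And>j. j < n2 \<Longrightarrow> \<sigma>C j \<in> carrier_mat dC dC" and sD: "\<And>j. j < n2 \<Longrightarrow> \<sigma>D j \<in> carrier_mat dD dD"
  shows "mtrace (kron (adj dC LA M2) (adj dD LB N2) *
            mat (dC*dD) (dC*dD) (\<lambda>(r,c). \<Sum>i<n2. complex_of_real (q i) * kron (\<sigma>C i) (\<sigma>D i) $$ (r,c)))
       = (\<Sum>j<n2. complex_of_real (q j) * (trm dC M2 (LA (\<sigma>C j)) * trm dD N2 (LB (\<sigma>D j))))"
proof -
  let ?T = "mat (dC*dD) (dC*dD) (\<lambda>(r,c). \<Sum>i<n2. complex_of_real (q i) * kron (\<sigma>C i) (\<sigma>D i) $$ (r,c))"
  have "mtrace (kron (adj dC LA M2) (adj dD LB N2) * ?T) =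
     trK dD dC (\<lambda>i j. adj dC LA M2 $$ (i,j)) (\<lambda>k l. adj dD LB N2 $$ (k,l)) (\<lambda>r c. ?T $$ (r,c))"
    by (rule trace_kron_gen) (auto simp: adj_carrier)
  also have "... = trK dD dC (\<lambda>i j. adj dC LA M2 $$ (i,j)) (\<lambda>k l. adj dD LB N2 $$ (k,l))
       (\<lambda>r c. \<Sum>i<n2. complex_of_real (q i) * kron (\<sigma>C i) (\<sigma>D i) $$ (r,c))"
    by (rule trK_congX) simp
  also have "... = (\<Sum>j<n2. complex_of_real (q j) * trK dD dC (\<lambda>i j. adj dC LA M2 $$ (i,j)) (\<lambda>k l. adj dD LB N2 $$ (k,l))
       (\<lambda>r c. kron (\<sigma>C j) (\<sigma>D j) $$ (r,c)))"
    unfolding trK_sumX trK_scaleX ..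
  also have "... = (\<Sum>j<n2. complex_of_real (q j) * (trm dC M2 (LA (\<sigma>C j)) * trm dD N2 (LB (\<sigma>D j))))"
  proof (intro sum.cong refl)
    fix j assume "j \<in> {..<n2}"
    hence j: "j < n2" by simp
    show "complex_of_real (q j) * trK dD dC (\<lambda>i j. adj dC LA M2 $$ (i,j)) (\<lambda>k l. adj dD LB N2 $$ (k,l))
       (\<lambda>r c. kron (\<sigma>C j) (\<sigma>D j) $$ (r,c)) = complex_of_real (q j) * (trm dC M2 (LA (\<sigma>C j)) * trm dD N2 (LB (\<sigma>D j)))"
      unfolding trK_kron[OF sC[OF j] sD[OF j]] trm_def adj_trace[OF LA sC[OF j]] adj_trace[OF LB sD[OF j]] ..
  qed
  finally show ?thesis .
qed

lemma trm_psd: "psd_op d A \<Longrightarrow> psd_op d B \<Longrightarrow> cnonneg (trm d A B)"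
  unfolding trm_def using psdf_trace psd_op_psdf by blast

lemma trm_povm_sum: assumes P: "povm d n M" and B: "B \<in> carrier_mat d d"
  shows "(\<Sum>a<n. trm d (M a) B) = mtrace B"
proof -
  have "(\<Sum>a<n. trm d (M a) B) = (\<Sum>i<d. \<Sum>j<d. (\<Sum>a<n. M a $$ (i,j)) * B $$ (j,i))"
    unfolding trm_def by (simp add: sum_distrib_right sum.swap[of _ "{..<n}"])
  also have "... = (\<Sum>i<d. \<Sum>j<d. (1\<^sub>m d :: complex mat) $$ (i,j) * B $$ (j,i))"
    using P unfolding povm_def by (intro sum.cong refl) auto
  also have "... = mtrace B" using B by (simp add: mtrace_def sum_ind)
  finally show ?thesis .
qed


lemma local_T:
  assumes L: "local_box nA nB mX mY w" and sep: "separable dC dD \<tau>"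
    and instA: "\<forall>x'<mX'. instrument dC mX (\<lambda>x. \<Lambda> x x')"
    and instB: "\<forall>y'<mY'. instrument dD mY (\<lambda>y. \<Gamma> y y')"
    and povmA: "\<forall>a<nA. \<forall>x<mX. \<forall>x'<mX'. povm dC nA' (\<lambda>a'. M2 a' a x x')"
    and povmB: "\<forall>b<nB. \<forall>y<mY. \<forall>y'<mY'. povm dD nB' (\<lambda>b'. N2 b' b y y')"
  shows "local_box nA' nB' mX' mY' (Tbox nA nB mX mY dC dD \<tau> \<Lambda> \<Gamma> M2 N2 w)"
proof -
  obtain n1 :: nat and q1 :: "nat \<Rightarrow> real" and pA pB :: "nat \<Rightarrow> nat \<Rightarrow> nat \<Rightarrow> real" where q1: "\<forall>i<n1. q1 i \<ge> 0" "(\<Sum>i<n1. q1 i) = 1"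
    and pA: "\<forall>i<n1. \<forall>x<mX. (\<forall>a<nA. pA i a x \<ge> 0) \<and> (\<Sum>a<nA. pA i a x) = 1"
    and pB: "\<forall>i<n1. \<forall>y<mY. (\<forall>b<nB. pB i b y \<ge> 0) \<and> (\<Sum>b<nB. pB i b y) = 1"
    and wq: "\<forall>a<nA. \<forall>b<nB. \<forall>x<mX. \<forall>y<mY. w a b x y = (\<Sum>i<n1. q1 i * pA i a x * pB i b y)"
    using L unfolding local_box_def by blast
  obtain n2 :: nat and q2 :: "nat \<Rightarrow> real" and \<sigma>C \<sigma>D :: "nat \<Rightarrow> complex mat" where H:
    "(\<forall>i<n2. q2 i \<ge> 0 \<and> density_op dC (\<sigma>C i) \<and> density_op dD (\<sigma>D i)) \<and>
      (\<Sum>i<n2. q2 i) = 1 \<and>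
      \<tau> = mat (dC*dD) (dC*dD) (\<lambda>(r,c). \<Sum>i<n2. complex_of_real (q2 i) * kron (\<sigma>C i) (\<sigma>D i) $$ (r,c))"
    using sep unfolding separable_def by (elim exE) (rule that)
  hence q2: "\<forall>i<n2. q2 i \<ge> 0 \<and> density_op dC (\<sigma>C i) \<and> density_op dD (\<sigma>D i)"
    and q2s: "(\<Sum>i<n2. q2 i) = 1"
    and \<tau>eq: "\<tau> = mat (dC*dD) (dC*dD) (\<lambda>(r,c). \<Sum>i<n2. complex_of_real (q2 i) * kron (\<sigma>C i) (\<sigma>D i) $$ (r,c))"
    by auto
  have cT: "\<tau> \<in> carrier_mat (dC*dD) (dC*dD)" using \<tau>eq by simp
  have sC: "\<And>j. j < n2 \<Longrightarrow> psd_op dC (\<sigma>C j)" and sD: "\<And>j. j < n2 \<Longrightarrow> psd_op dD (\<sigma>D j)"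
    using q2 density_op_def by auto
  have cC: "\<And>j. j < n2 \<Longrightarrow> \<sigma>C j \<in> carrier_mat dC dC" and cD: "\<And>j. j < n2 \<Longrightarrow> \<sigma>D j \<in> carrier_mat dD dD"
    using sC sD psd_op_def by auto
  define \<alpha> where "\<alpha> j a' a x x' = Re (trm dC (M2 a' a x x') (\<Lambda> x x' (\<sigma>C j)))" for j a' a x x'
  define \<beta> where "\<beta> j b' b y y' = Re (trm dD (N2 b' b y y') (\<Gamma> y y' (\<sigma>D j)))" for j b' b y y'
  have \<alpha>c: "cnonneg (trm dC (M2 a' a x x') (\<Lambda> x x' (\<sigma>C j)))"
    if "j < n2" "a' < nA'" "a < nA" "x < mX" "x' < mX'" for j a' a x x'
  proof (rule trm_psd)
    show "psd_op dC (M2 a' a x x')" using that povmA by (auto simp: povm_def)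
    have "cp_map dC dC (\<Lambda> x x')" using that instA inst_cp[where L="\<lambda>x. \<Lambda> x x'"] by auto
    thus "psd_op dC (\<Lambda> x x' (\<sigma>C j))" using cp_positive sC that by blast
  qed
  have \<beta>c: "cnonneg (trm dD (N2 b' b y y') (\<Gamma> y y' (\<sigma>D j)))"
    if "j < n2" "b' < nB'" "b < nB" "y < mY" "y' < mY'" for j b' b y y'
  proof (rule trm_psd)
    show "psd_op dD (N2 b' b y y')" using that povmB by (auto simp: povm_def)
    have "cp_map dD dD (\<Gamma> y y')" using that instB inst_cp[where L="\<lambda>y. \<Gamma> y y'"] by auto
    thus "psd_op dD (\<Gamma> y y' (\<sigma>D j))" using cp_positive sD that by blast
  qed
  have \<alpha>sum: "(\<Sum>a'<nA'. \<alpha> j a' a x x') = Re (mtrace (\<Lambda> x x' (\<sigma>C j)))"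
    if "j < n2" "a < nA" "x < mX" "x' < mX'" for j a x x'
  proof -
    have "(\<Sum>a'<nA'. trm dC (M2 a' a x x') (\<Lambda> x x' (\<sigma>C j))) = mtrace (\<Lambda> x x' (\<sigma>C j))"
    proof (rule trm_povm_sum)
      show "povm dC nA' (\<lambda>a'. M2 a' a x x')" using that povmA by auto
      have "lin_map dC dC (\<Lambda> x x')" using that instA inst_lin[where L="\<lambda>x. \<Lambda> x x'"] by auto
      thus "\<Lambda> x x' (\<sigma>C j) \<in> carrier_mat dC dC" using lin_carrier cC that by blast
    qed
    thus ?thesis unfolding \<alpha>_def by (simp flip: Re_sum)
  qed
  have \<beta>sum: "(\<Sum>b'<nB'. \<beta> j b' b y y') = Re (mtrace (\<Gamma> y y' (\<sigma>D j)))"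
    if "j < n2" "b < nB" "y < mY" "y' < mY'" for j b y y'
  proof -
    have "(\<Sum>b'<nB'. trm dD (N2 b' b y y') (\<Gamma> y y' (\<sigma>D j))) = mtrace (\<Gamma> y y' (\<sigma>D j))"
    proof (rule trm_povm_sum)
      show "povm dD nB' (\<lambda>b'. N2 b' b y y')" using that povmB by auto
      have "lin_map dD dD (\<Gamma> y y')" using that instB inst_lin[where L="\<lambda>y. \<Gamma> y y'"] by auto
      thus "\<Gamma> y y' (\<sigma>D j) \<in> carrier_mat dD dD" using lin_carrier cD that by blast
    qed
    thus ?thesis unfolding \<beta>_def by (simp flip: Re_sum)
  qed
  have \<gamma>A: "(\<Sum>x<mX. Re (mtrace (\<Lambda> x x' (\<sigma>C j)))) = 1" if "j < n2" "x' < mX'" for j x'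
  proof -
    have "(\<Sum>x<mX. mtrace (\<Lambda> x x' (\<sigma>C j))) = mtrace (\<sigma>C j)" using instA that cC unfolding instrument_def by blast
    also have "... = 1" using q2 that density_op_def by blast
    finally show ?thesis by (simp flip: Re_sum)
  qed
  have \<gamma>B: "(\<Sum>y<mY. Re (mtrace (\<Gamma> y y' (\<sigma>D j)))) = 1" if "j < n2" "y' < mY'" for j y'
  proof -
    have "(\<Sum>y<mY. mtrace (\<Gamma> y y' (\<sigma>D j))) = mtrace (\<sigma>D j)" using instB that cD unfolding instrument_def by blast
    also have "... = 1" using q2 that density_op_def by blast
    finally show ?thesis by (simp flip: Re_sum)
  qed
  have coef: "Re (mtrace (kron (M2 a' a x x') (N2 b' b y y') * map_tensor dC dD dC dD (\<Lambda> x x') (\<Gamma> y y') \<tau>))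
     = (\<Sum>j<n2. q2 j * (\<alpha> j a' a x x' * \<beta> j b' b y y'))"
    if "a' < nA'" "b' < nB'" "x' < mX'" "y' < mY'" "a < nA" "b < nB" "x < mX" "y < mY" for a' b' x' y' a b x y
  proof -
    have lA: "lin_map dC dC (\<Lambda> x x')" using that instA inst_lin[where L="\<lambda>x. \<Lambda> x x'"] by auto
    have lB: "lin_map dD dD (\<Gamma> y y')" using that instB inst_lin[where L="\<lambda>y. \<Gamma> y y'"] by auto
    have cM: "M2 a' a x x' \<in> carrier_mat dC dC" using that povmA povm_carrier[where M="\<lambda>a'. M2 a' a x x'"] by blast
    have cN: "N2 b' b y y' \<in> carrier_mat dD dD" using that povmB povm_carrier[where M="\<lambda>b'. N2 b' b y y'"] by blast
    have "mtrace (kron (M2 a' a x x') (N2 b' b y y') * map_tensor dC dD dC dD (\<Lambda> x x') (\<Gamma> y y') \<tau>)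
       = mtrace (kron (adj dC (\<Lambda> x x') (M2 a' a x x')) (adj dD (\<Gamma> y y') (N2 b' b y y')) * \<tau>)"
      by (rule trace_map_tensor[OF lA lB cM cN cT])
    also have "... = (\<Sum>j<n2. complex_of_real (q2 j) * (trm dC (M2 a' a x x') (\<Lambda> x x' (\<sigma>C j)) * trm dD (N2 b' b y y') (\<Gamma> y y' (\<sigma>D j))))"
      unfolding \<tau>eq using cC cD by (rule coef_sep[OF lA lB])
    also have "... = (\<Sum>j<n2. complex_of_real (q2 j * (\<alpha> j a' a x x' * \<beta> j b' b y y')))"
    proof (intro sum.cong refl)
      fix j assume "j \<in> {..<n2}"
      hence "cnonneg (trm dC (M2 a' a x x') (\<Lambda> x x' (\<sigma>C j)))" "cnonneg (trm dD (N2 b' b y y') (\<Gamma> y y' (\<sigma>D j)))"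
        using \<alpha>c \<beta>c that by auto
      thus "complex_of_real (q2 j) * (trm dC (M2 a' a x x') (\<Lambda> x x' (\<sigma>C j)) * trm dD (N2 b' b y y') (\<Gamma> y y' (\<sigma>D j))) =
          complex_of_real (q2 j * (\<alpha> j a' a x x' * \<beta> j b' b y y'))"
        unfolding \<alpha>_def \<beta>_def by (metis cnonneg_real of_real_mult)
    qed
    finally show ?thesis by (simp flip: of_real_sum)
  qed
  define Q where "Q k = q1 (k div n2) * q2 (k mod n2)" for k
  define PA where "PA k a' x' = (\<Sum>a<nA. \<Sum>x<mX. \<alpha> (k mod n2) a' a x x' * pA (k div n2) a x)" for k a' x'
  define PB where "PB k b' y' = (\<Sum>b<nB. \<Sum>y<mY. \<beta> (k mod n2) b' b y y' * pB (k div n2) b y)" for k b' y'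
  have kb: "k div n2 < n1" "k mod n2 < n2" if "k < n1*n2" for k using that div_bound mod_bound by auto
  have P1: "\<forall>k<n1*n2. Q k \<ge> 0" using q1 q2 kb unfolding Q_def by auto
  have P2: "(\<Sum>k<n1*n2. Q k) = 1"
    unfolding sum_split_mult Q_def using q1 q2s by (simp add: sum_product[symmetric])
  have P3: "\<forall>k<n1*n2. \<forall>x'<mX'. (\<forall>a'<nA'. PA k a' x' \<ge> 0) \<and> (\<Sum>a'<nA'. PA k a' x') = 1"
  proof (intro allI impI conjI)
    fix k x' a' assume k: "k < n1*n2" and x': "x' < mX'" and a': "a' < nA'"
    show "PA k a' x' \<ge> 0" unfolding PA_def using \<alpha>c[OF kb(2)[OF k] a' _ _ x'] pA kb[OF k]
      by (intro sum_nonneg mult_nonneg_nonneg) (auto simp: \<alpha>_def cnonneg_def)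
  next
    fix k x' assume k: "k < n1*n2" and x': "x' < mX'"
    have "(\<Sum>a'<nA'. PA k a' x') = (\<Sum>a<nA. \<Sum>x<mX. (\<Sum>a'<nA'. \<alpha> (k mod n2) a' a x x') * pA (k div n2) a x)"
      unfolding PA_def by (simp add: sum_distrib_right swap_out4[where L="{}"] sum.swap[of _ "{..<nA'}"])
    also have "... = (\<Sum>a<nA. \<Sum>x<mX. Re (mtrace (\<Lambda> x x' (\<sigma>C (k mod n2)))) * pA (k div n2) a x)"
      using \<alpha>sum kb[OF k] x' by (intro sum.cong refl) auto
    also have "... = (\<Sum>x<mX. Re (mtrace (\<Lambda> x x' (\<sigma>C (k mod n2)))) * (\<Sum>a<nA. pA (k div n2) a x))"
      by (subst sum.swap) (simp add: sum_distrib_left)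
    also have "... = (\<Sum>x<mX. Re (mtrace (\<Lambda> x x' (\<sigma>C (k mod n2)))))"
      using pA kb[OF k] by (intro sum.cong refl) auto
    also have "... = 1" using \<gamma>A kb[OF k] x' by blast
    finally show "(\<Sum>a'<nA'. PA k a' x') = 1" .
  qed
  have P4: "\<forall>k<n1*n2. \<forall>y'<mY'. (\<forall>b'<nB'. PB k b' y' \<ge> 0) \<and> (\<Sum>b'<nB'. PB k b' y') = 1"
  proof (intro allI impI conjI)
    fix k y' b' assume k: "k < n1*n2" and y': "y' < mY'" and b': "b' < nB'"
    show "PB k b' y' \<ge> 0" unfolding PB_def using \<beta>c[OF kb(2)[OF k] b' _ _ y'] pB kb[OF k]
      by (intro sum_nonneg mult_nonneg_nonneg) (auto simp: \<beta>_def cnonneg_def)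
  next
    fix k y' assume k: "k < n1*n2" and y': "y' < mY'"
    have "(\<Sum>b'<nB'. PB k b' y') = (\<Sum>b<nB. \<Sum>y<mY. (\<Sum>b'<nB'. \<beta> (k mod n2) b' b y y') * pB (k div n2) b y)"
      unfolding PB_def by (simp add: sum_distrib_right swap_out4[where L="{}"] sum.swap[of _ "{..<nB'}"])
    also have "... = (\<Sum>b<nB. \<Sum>y<mY. Re (mtrace (\<Gamma> y y' (\<sigma>D (k mod n2)))) * pB (k div n2) b y)"
      using \<beta>sum kb[OF k] y' by (intro sum.cong refl) auto
    also have "... = (\<Sum>y<mY. Re (mtrace (\<Gamma> y y' (\<sigma>D (k mod n2)))) * (\<Sum>b<nB. pB (k div n2) b y))"
      by (subst sum.swap) (simp add: sum_distrib_left)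
    also have "... = (\<Sum>y<mY. Re (mtrace (\<Gamma> y y' (\<sigma>D (k mod n2)))))"
      using pB kb[OF k] by (intro sum.cong refl) auto
    also have "... = 1" using \<gamma>B kb[OF k] y' by blast
    finally show "(\<Sum>b'<nB'. PB k b' y') = 1" .
  qed
  have P5: "\<forall>a'<nA'. \<forall>b'<nB'. \<forall>x'<mX'. \<forall>y'<mY'. Tbox nA nB mX mY dC dD \<tau> \<Lambda> \<Gamma> M2 N2 w a' b' x' y' = (\<Sum>k<n1*n2. Q k * PA k a' x' * PB k b' y')"
  proof (intro allI impI)
    fix a' b' x' y' assume a': "a' < nA'" and b': "b' < nB'" and x': "x' < mX'" and y': "y' < mY'"
    define G where "G a b x y i j = (q1 i * q2 j) * ((\<alpha> j a' a x x' * pA i a x) * (\<beta> j b' b y y' * pB i b y))" for a b x y i j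
    have "Tbox nA nB mX mY dC dD \<tau> \<Lambda> \<Gamma> M2 N2 w a' b' x' y' =
       (\<Sum>a<nA. \<Sum>b<nB. \<Sum>x<mX. \<Sum>y<mY. (\<Sum>j<n2. q2 j * (\<alpha> j a' a x x' * \<beta> j b' b y y')) * (\<Sum>i<n1. q1 i * pA i a x * pB i b y))"
      unfolding Tbox_def using a' b' x' y' wq coef by (intro sum.cong refl) auto
    also have "... = (\<Sum>a<nA. \<Sum>b<nB. \<Sum>x<mX. \<Sum>y<mY. \<Sum>i<n1. \<Sum>j<n2. G a b x y i j)"
      unfolding G_def by (intro sum.cong refl) (simp add: sum_product sum.swap[of _ "{..<n1}"] mult_ac)
    also have "... = (\<Sum>i<n1. \<Sum>a<nA. \<Sum>b<nB. \<Sum>x<mX. \<Sum>y<mY. \<Sum>j<n2. G a b x y i j)"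
      by (rule swap_out4)
    also have "... = (\<Sum>i<n1. \<Sum>j<n2. \<Sum>a<nA. \<Sum>b<nB. \<Sum>x<mX. \<Sum>y<mY. G a b x y i j)"
      by (intro sum.cong refl swap_out4)
    also have "... = (\<Sum>i<n1. \<Sum>j<n2. Q (i*n2+j) * PA (i*n2+j) a' x' * PB (i*n2+j) b' y')"
    proof (intro sum.cong refl)
      fix i j assume "i \<in> {..<n1}" "j \<in> {..<n2}"
      hence j: "j < n2" by simp
      have "(\<Sum>a<nA. \<Sum>b<nB. \<Sum>x<mX. \<Sum>y<mY. G a b x y i j) = (\<Sum>a<nA. \<Sum>x<mX. \<Sum>b<nB. \<Sum>y<mY. G a b x y i j)"
        by (intro sum.cong refl sum.swap)
      also have "... = (q1 i * q2 j) * ((\<Sum>a<nA. \<Sum>x<mX. \<alpha> j a' a x x' * pA i a x) * (\<Sum>b<nB. \<Sum>y<mY. \<beta> j b' b y y' * pB i b y))"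
        unfolding G_def by (simp only: sum_distrib_right, simp only: sum_distrib_left)
      also have "... = Q (i*n2+j) * PA (i*n2+j) a' x' * PB (i*n2+j) b' y'"
        unfolding Q_def PA_def PB_def using j by simp
      finally show "(\<Sum>a<nA. \<Sum>b<nB. \<Sum>x<mX. \<Sum>y<mY. G a b x y i j) = Q (i*n2+j) * PA (i*n2+j) a' x' * PB (i*n2+j) b' y'" .
    qed
    also have "... = (\<Sum>k<n1*n2. Q k * PA k a' x' * PB k b' y')" unfolding sum_split_mult ..
    finally show "Tbox nA nB mX mY dC dD \<tau> \<Lambda> \<Gamma> M2 N2 w a' b' x' y' = (\<Sum>k<n1*n2. Q k * PA k a' x' * PB k b' y')" .
  qed
  have "(\<forall>k<n1*n2. Q k \<ge> 0) \<and> (\<Sum>k<n1*n2. Q k) = 1 \<and>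
        (\<forall>k<n1*n2. \<forall>x'<mX'. (\<forall>a'<nA'. PA k a' x' \<ge> 0) \<and> (\<Sum>a'<nA'. PA k a' x') = 1) \<and>
        (\<forall>k<n1*n2. \<forall>y'<mY'. (\<forall>b'<nB'. PB k b' y' \<ge> 0) \<and> (\<Sum>b'<nB'. PB k b' y') = 1) \<and>
        (\<forall>a'<nA'. \<forall>b'<nB'. \<forall>x'<mX'. \<forall>y'<mY'. Tbox nA nB mX mY dC dD \<tau> \<Lambda> \<Gamma> M2 N2 w a' b' x' y' = (\<Sum>k<n1*n2. Q k * PA k a' x' * PB k b' y'))"
    using P1 P2 P3 P4 P5 by blast
  thus ?thesis unfolding local_box_def by blast
qed

lemma cut_bounds: fixes r dA dB dC dD :: nat assumes "r < dA*dC*(dB*dD)"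
  shows "r mod (dB*dD) div dD < dB" "r mod (dB*dD) mod dD < dD" "r div (dB*dD) mod dC < dC" "r div (dB*dD) div dC < dA"
proof -
  have a: "r div (dB*dD) < dA*dC" using div_bound[of r "dA*dC" "dB*dD"] assms by simp
  have b: "r mod (dB*dD) < dB*dD" using mod_bound[of r "dA*dC" "dB*dD"] assms by simp
  show "r mod (dB*dD) div dD < dB" using div_bound[OF b] .
  show "r mod (dB*dD) mod dD < dD" using mod_bound[OF b] .
  show "r div (dB*dD) mod dC < dC" using mod_bound[OF a] .
  show "r div (dB*dD) div dC < dA" using div_bound[OF a] .
qed

lemma cA_div: "r < dA*dC*(dB*dD) \<Longrightarrow> cA dB dC dD r div dB = r div (dB*dD) div dC"
  unfolding cA_def using cut_bounds(1) idx_div by blast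
lemma cA_mod: "r < dA*dC*(dB*dD) \<Longrightarrow> cA dB dC dD r mod dB = r mod (dB*dD) div dD"
  unfolding cA_def using cut_bounds(1) idx_mod by blast
lemma cC_div: "r < dA*dC*(dB*dD) \<Longrightarrow> cC dB dC dD r div dD = r div (dB*dD) mod dC"
  unfolding cC_def using cut_bounds(2) idx_div by blast
lemma cC_mod: "r < dA*dC*(dB*dD) \<Longrightarrow> cC dB dC dD r mod dD = r mod (dB*dD) mod dD"
  unfolding cC_def using cut_bounds(2) idx_mod by blast

lemma trace_kron: assumes A: "A \<in> carrier_mat n n" and B: "B \<in> carrier_mat m m" shows "mtrace (kron A B) = mtrace A * mtrace B"
proof -
  have "mtrace (kron A B) = (\<Sum>r<n*m. kron A B $$ (r,r))" using kron_carrier[OF A B] by (simp add: mtrace_def)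
  also have "... = (\<Sum>i<n. \<Sum>k<m. A $$ (i,i) * B $$ (k,k))" unfolding sum_split_mult using A B by (simp add: kron_index2)
  also have "... = mtrace A * mtrace B" using A B by (simp add: mtrace_def sum_product)
  finally show ?thesis .
qed

lemma density_kron: "density_op n A \<Longrightarrow> density_op m B \<Longrightarrow> density_op (n*m) (kron A B)"
proof -
  assume a: "density_op n A" "density_op m B"
  hence "A \<in> carrier_mat n n" "B \<in> carrier_mat m m" by (auto simp: density_op_def psd_op_def)
  thus ?thesis using a psd_kron trace_kron unfolding density_op_def by simp
qed

lemma density_cut: assumes "density_op (dA*dB) Op" "density_op (dC*dD) \<tau>"
  shows "density_op (dA*dC*(dB*dD)) (cut_tensor dA dB dC dD Op \<tau>)"
proof -
  have "Op \<in> carrier_mat (dA*dB) (dA*dB)" "\<tau> \<in> carrier_mat (dC*dD) (dC*dD)"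
    using assms by (auto simp: density_op_def psd_op_def)
  thus ?thesis using assms psd_cut trace_cut unfolding density_op_def by simp
qed

lemma herm_cut: assumes "hermitian_op (dA*dB) Op" "hermitian_op (dC*dD) \<tau>"
  shows "hermitian_op (dA*dC*(dB*dD)) (cut_tensor dA dB dC dD Op \<tau>)"
  unfolding hermitian_op_def
proof (intro conjI allI impI)
  show "cut_tensor dA dB dC dD Op \<tau> \<in> carrier_mat (dA*dC*(dB*dD)) (dA*dC*(dB*dD))" by (rule cut_carrier)
  fix i j assume i: "i < dA*dC*(dB*dD)" and j: "j < dA*dC*(dB*dD)"
  have "Op $$ (cA dB dC dD i, cA dB dC dD j) = cnj (Op $$ (cA dB dC dD j, cA dB dC dD i))"
    using assms(1) cA_bound[OF i] cA_bound[OF j] unfolding hermitian_op_def by blast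
  moreover have "\<tau> $$ (cC dB dC dD i, cC dB dC dD j) = cnj (\<tau> $$ (cC dB dC dD j, cC dB dC dD i))"
    using assms(2) cC_bound[OF i] cC_bound[OF j] unfolding hermitian_op_def by blast
  ultimately show "cut_tensor dA dB dC dD Op \<tau> $$ (i, j) = cnj (cut_tensor dA dB dC dD Op \<tau> $$ (j, i))"
    using i j by (simp add: cut_index)
qed

lemma psd_herm: "psd_op n A \<Longrightarrow> hermitian_op n A"
  unfolding hermitian_op_def using psd_op_psdf psdf_herm by blast

lemma pseudo_cut: assumes "pseudo_state (dA*dB) Op" "density_op (dC*dD) \<tau>"
  shows "pseudo_state (dA*dC*(dB*dD)) (cut_tensor dA dB dC dD Op \<tau>)"
proof -
  have h: "hermitian_op (dC*dD) \<tau>" using assms(2) psd_herm density_op_def by blast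
  have "Op \<in> carrier_mat (dA*dB) (dA*dB)" "\<tau> \<in> carrier_mat (dC*dD) (dC*dD)"
    using assms by (auto simp: density_op_def psd_op_def pseudo_state_def hermitian_op_def)
  thus ?thesis using assms herm_cut[OF _ h] trace_cut unfolding pseudo_state_def density_op_def by simp
qed

lemma sep_cut: assumes X: "separable dA dB X" and T: "separable dC dD \<tau>"
  shows "separable (dA*dC) (dB*dD) (cut_tensor dA dB dC dD X \<tau>)"
proof -
  obtain n :: nat and q :: "nat \<Rightarrow> real" and \<sigma>A \<sigma>B :: "nat \<Rightarrow> complex mat" where H1:
    "(\<forall>i<n. q i \<ge> 0 \<and> density_op dA (\<sigma>A i) \<and> density_op dB (\<sigma>B i)) \<and>
      (\<Sum>i<n. q i) = 1 \<and>
      X = mat (dA*dB) (dA*dB) (\<lambda>(r,c). \<Sum>i<n. complex_of_real (q i) * kron (\<sigma>A i) (\<sigma>B i) $$ (r,c))"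
    using X unfolding separable_def by (elim exE) (rule that)
  obtain n' :: nat and q' :: "nat \<Rightarrow> real" and \<sigma>C \<sigma>D :: "nat \<Rightarrow> complex mat" where H2:
    "(\<forall>i<n'. q' i \<ge> 0 \<and> density_op dC (\<sigma>C i) \<and> density_op dD (\<sigma>D i)) \<and>
      (\<Sum>i<n'. q' i) = 1 \<and>
      \<tau> = mat (dC*dD) (dC*dD) (\<lambda>(r,c). \<Sum>i<n'. complex_of_real (q' i) * kron (\<sigma>C i) (\<sigma>D i) $$ (r,c))"
    using T unfolding separable_def by (elim exE) (rule that)
  have cA': "\<And>i. i < n \<Longrightarrow> \<sigma>A i \<in> carrier_mat dA dA" "\<And>i. i < n \<Longrightarrow> \<sigma>B i \<in> carrier_mat dB dB"
    using H1 by (auto simp: density_op_def psd_op_def)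
  have cC': "\<And>i. i < n' \<Longrightarrow> \<sigma>C i \<in> carrier_mat dC dC" "\<And>i. i < n' \<Longrightarrow> \<sigma>D i \<in> carrier_mat dD dD"
    using H2 by (auto simp: density_op_def psd_op_def)
  define Q where "Q k = q (k div n') * q' (k mod n')" for k
  define SA where "SA k = kron (\<sigma>A (k div n')) (\<sigma>C (k mod n'))" for k
  define SB where "SB k = kron (\<sigma>B (k div n')) (\<sigma>D (k mod n'))" for k
  have kb: "k div n' < n" "k mod n' < n'" if "k < n*n'" for k using that div_bound mod_bound by auto
  have P1: "\<forall>k<n*n'. Q k \<ge> 0 \<and> density_op (dA*dC) (SA k) \<and> density_op (dB*dD) (SB k)"
    using H1 H2 kb unfolding Q_def SA_def SB_def by (auto intro!: density_kron)
  have P2: "(\<Sum>k<n*n'. Q k) = 1" unfolding sum_split_mult Q_def using H1 H2 by (simp add: sum_product[symmetric])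
  have P3: "cut_tensor dA dB dC dD X \<tau> = mat (dA*dC*(dB*dD)) (dA*dC*(dB*dD))
      (\<lambda>(r,c). \<Sum>k<n*n'. complex_of_real (Q k) * kron (SA k) (SB k) $$ (r,c))"
  proof (rule eq_matI)
    fix r c assume "r < dim_row (mat (dA*dC*(dB*dD)) (dA*dC*(dB*dD)) (\<lambda>(r,c). \<Sum>k<n*n'. complex_of_real (Q k) * kron (SA k) (SB k) $$ (r,c)))"
      "c < dim_col (mat (dA*dC*(dB*dD)) (dA*dC*(dB*dD)) (\<lambda>(r,c). \<Sum>k<n*n'. complex_of_real (Q k) * kron (SA k) (SB k) $$ (r,c)))"
    hence r: "r < dA*dC*(dB*dD)" and c: "c < dA*dC*(dB*dD)" by auto
    note br = cut_bounds[OF r] and bc = cut_bounds[OF c]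
    let ?a = "\<lambda>i. \<sigma>A i $$ (r div (dB*dD) div dC, c div (dB*dD) div dC)"
    let ?b = "\<lambda>i. \<sigma>B i $$ (r mod (dB*dD) div dD, c mod (dB*dD) div dD)"
    let ?c = "\<lambda>j. \<sigma>C j $$ (r div (dB*dD) mod dC, c div (dB*dD) mod dC)"
    let ?d = "\<lambda>j. \<sigma>D j $$ (r mod (dB*dD) mod dD, c mod (dB*dD) mod dD)"
    have "cut_tensor dA dB dC dD X \<tau> $$ (r,c) = X $$ (cA dB dC dD r, cA dB dC dD c) * \<tau> $$ (cC dB dC dD r, cC dB dC dD c)"
      using r c by (rule cut_index)
    also have "... = (\<Sum>i<n. complex_of_real (q i) * (?a i * ?b i)) * (\<Sum>j<n'. complex_of_real (q' j) * (?c j * ?d j))"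
    proof -
      have "X $$ (cA dB dC dD r, cA dB dC dD c) = (\<Sum>i<n. complex_of_real (q i) * kron (\<sigma>A i) (\<sigma>B i) $$ (cA dB dC dD r, cA dB dC dD c))"
        using H1 cA_bound[OF r] cA_bound[OF c] by simp
      also have "... = (\<Sum>i<n. complex_of_real (q i) * (?a i * ?b i))"
      proof (intro sum.cong refl)
        fix i assume "i \<in> {..<n}" hence i: "i < n" by simp
        show "complex_of_real (q i) * kron (\<sigma>A i) (\<sigma>B i) $$ (cA dB dC dD r, cA dB dC dD c) = complex_of_real (q i) * (?a i * ?b i)"
          using kron_index[OF cA'(1)[OF i] cA'(2)[OF i] cA_bound[OF r] cA_bound[OF c]]
          by (simp add: cA_div[OF r] cA_div[OF c] cA_mod[OF r] cA_mod[OF c])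
      qed
      finally have e1: "X $$ (cA dB dC dD r, cA dB dC dD c) = (\<Sum>i<n. complex_of_real (q i) * (?a i * ?b i))" .
      have "\<tau> $$ (cC dB dC dD r, cC dB dC dD c) = (\<Sum>j<n'. complex_of_real (q' j) * kron (\<sigma>C j) (\<sigma>D j) $$ (cC dB dC dD r, cC dB dC dD c))"
        using H2 cC_bound[OF r] cC_bound[OF c] by simp
      also have "... = (\<Sum>j<n'. complex_of_real (q' j) * (?c j * ?d j))"
      proof (intro sum.cong refl)
        fix j assume "j \<in> {..<n'}" hence j: "j < n'" by simp
        show "complex_of_real (q' j) * kron (\<sigma>C j) (\<sigma>D j) $$ (cC dB dC dD r, cC dB dC dD c) = complex_of_real (q' j) * (?c j * ?d j)"
          using kron_index[OF cC'(1)[OF j] cC'(2)[OF j] cC_bound[OF r] cC_bound[OF c]]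
          by (simp add: cC_div[OF r] cC_div[OF c] cC_mod[OF r] cC_mod[OF c])
      qed
      finally show ?thesis using e1 by simp
    qed
    also have "... = (\<Sum>i<n. \<Sum>j<n'. complex_of_real (Q (i*n'+j)) * kron (SA (i*n'+j)) (SB (i*n'+j)) $$ (r,c))"
      unfolding sum_product
    proof (intro sum.cong refl)
      fix i j assume "i \<in> {..<n}" "j \<in> {..<n'}"
      hence i: "i < n" and j: "j < n'" by auto
      have "kron (SA (i*n'+j)) (SB (i*n'+j)) $$ (r,c) = kron (\<sigma>A i) (\<sigma>C j) $$ (r div (dB*dD), c div (dB*dD)) * kron (\<sigma>B i) (\<sigma>D j) $$ (r mod (dB*dD), c mod (dB*dD))"
        unfolding SA_def SB_def using j kron_index[OF kron_carrier[OF cA'(1)[OF i] cC'(1)[OF j]] kron_carrier[OF cA'(2)[OF i] cC'(2)[OF j]] r c] by simp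
      also have "... = ?a i * ?c j * (?b i * ?d j)"
      proof -
        have rd: "r div (dB*dD) < dA*dC" "c div (dB*dD) < dA*dC" "r mod (dB*dD) < dB*dD" "c mod (dB*dD) < dB*dD"
          using div_bound[of r "dA*dC" "dB*dD"] div_bound[of c "dA*dC" "dB*dD"] mod_bound[of r "dA*dC" "dB*dD"] mod_bound[of c "dA*dC" "dB*dD"] r c by auto
        show ?thesis using kron_index[OF cA'(1)[OF i] cC'(1)[OF j] rd(1) rd(2)] kron_index[OF cA'(2)[OF i] cC'(2)[OF j] rd(3) rd(4)] by simp
      qed
      finally show "complex_of_real (q i) * (?a i * ?b i) * (complex_of_real (q' j) * (?c j * ?d j)) =
          complex_of_real (Q (i*n'+j)) * kron (SA (i*n'+j)) (SB (i*n'+j)) $$ (r,c)"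
        unfolding Q_def using j by (simp add: mult_ac)
    qed
    also have "... = (\<Sum>k<n*n'. complex_of_real (Q k) * kron (SA k) (SB k) $$ (r,c))" unfolding sum_split_mult ..
    finally show "cut_tensor dA dB dC dD X \<tau> $$ (r,c) = mat (dA*dC*(dB*dD)) (dA*dC*(dB*dD))
      (\<lambda>(r,c). \<Sum>k<n*n'. complex_of_real (Q k) * kron (SA k) (SB k) $$ (r,c)) $$ (r,c)" using r c by simp
  qed (auto simp: cut_carrier[THEN carrier_matD(1)] cut_carrier[THEN carrier_matD(2)])
  show ?thesis unfolding separable_def using P1 P2 P3 by (intro exI[of _ "n*n'"] exI[of _ Q] exI[of _ SA] exI[of _ SB]) simp
qed

lemma cut_lin: assumes O: "Op \<in> carrier_mat (dA*dB) (dA*dB)" and W: "W \<in> carrier_mat (dA*dB) (dA*dB)"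
  shows "cut_tensor dA dB dC dD (c \<cdot>\<^sub>m (Op + t \<cdot>\<^sub>m W)) \<tau> = c \<cdot>\<^sub>m (cut_tensor dA dB dC dD Op \<tau> + t \<cdot>\<^sub>m cut_tensor dA dB dC dD W \<tau>)"
proof (rule eq_matI)
  fix i j assume "i < dim_row (c \<cdot>\<^sub>m (cut_tensor dA dB dC dD Op \<tau> + t \<cdot>\<^sub>m cut_tensor dA dB dC dD W \<tau>))"
    "j < dim_col (c \<cdot>\<^sub>m (cut_tensor dA dB dC dD Op \<tau> + t \<cdot>\<^sub>m cut_tensor dA dB dC dD W \<tau>))"
  hence i: "i < dA*dC*(dB*dD)" and j: "j < dA*dC*(dB*dD)"
    using cut_carrier[of dA dB dC dD W \<tau>] by auto
  show "cut_tensor dA dB dC dD (c \<cdot>\<^sub>m (Op + t \<cdot>\<^sub>m W)) \<tau> $$ (i,j) =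
     (c \<cdot>\<^sub>m (cut_tensor dA dB dC dD Op \<tau> + t \<cdot>\<^sub>m cut_tensor dA dB dC dD W \<tau>)) $$ (i,j)"
  proof -
    have r: "(c \<cdot>\<^sub>m (cut_tensor dA dB dC dD Op \<tau> + t \<cdot>\<^sub>m cut_tensor dA dB dC dD W \<tau>)) $$ (i,j)
      = c * (cut_tensor dA dB dC dD Op \<tau> $$ (i,j) + t * cut_tensor dA dB dC dD W \<tau> $$ (i,j))"
      using i j cut_carrier[of dA dB dC dD Op \<tau>] cut_carrier[of dA dB dC dD W \<tau>] by simp
    have l: "cut_tensor dA dB dC dD (c \<cdot>\<^sub>m (Op + t \<cdot>\<^sub>m W)) \<tau> $$ (i,j) =
      (c * (Op $$ (cA dB dC dD i, cA dB dC dD j) + t * W $$ (cA dB dC dD i, cA dB dC dD j))) * \<tau> $$ (cC dB dC dD i, cC dB dC dD j)"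
      using i j O W cA_bound[OF i] cA_bound[OF j] by (simp add: cut_index)
    show ?thesis unfolding r l using i j by (simp add: cut_index algebra_simps)
  qed
qed (auto simp: cut_carrier[THEN carrier_matD(1)] cut_carrier[THEN carrier_matD(2)])

lemma sep_carrier: "separable dA dB W \<Longrightarrow> W \<in> carrier_mat (dA*dB) (dA*dB)"
  unfolding separable_def by auto

lemma rS_cut: assumes O: "Op \<in> carrier_mat (dA*dB) (dA*dB)" and T: "separable dC dD \<tau>"
  shows "r_S_op (dA*dC) (dB*dD) (cut_tensor dA dB dC dD Op \<tau>) \<le> r_S_op dA dB Op"
  unfolding r_S_op_def op_robustness_def
proof (rule Inf_superset_mono, rule image_mono, rule subsetI)
  fix t assume "t \<in> {t. t \<ge> 0 \<and> (\<exists>W. separable dA dB W \<and> separable dA dB (complex_of_real (1 / (1 + t)) \<cdot>\<^sub>m (Op + complex_of_real t \<cdot>\<^sub>m W)))}"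
  then obtain W where t: "t \<ge> 0" and W: "separable dA dB W"
    and S: "separable dA dB (complex_of_real (1 / (1 + t)) \<cdot>\<^sub>m (Op + complex_of_real t \<cdot>\<^sub>m W))" by blast
  have "separable (dA*dC) (dB*dD) (cut_tensor dA dB dC dD W \<tau>)" by (rule sep_cut[OF W T])
  moreover have "separable (dA*dC) (dB*dD) (complex_of_real (1 / (1 + t)) \<cdot>\<^sub>m (cut_tensor dA dB dC dD Op \<tau> + complex_of_real t \<cdot>\<^sub>m cut_tensor dA dB dC dD W \<tau>))"
    using sep_cut[OF S T] cut_lin[OF O sep_carrier[OF W]] by simp
  ultimately show "t \<in> {t. t \<ge> 0 \<and> (\<exists>W. separable (dA*dC) (dB*dD) W \<and> separable (dA*dC) (dB*dD) (complex_of_real (1 / (1 + t)) \<cdot>\<^sub>m (cut_tensor dA dB dC dD Op \<tau> + complex_of_real t \<cdot>\<^sub>m W)))}"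
    using t by blast
qed

lemma rD_cut: assumes O: "Op \<in> carrier_mat (dA*dB) (dA*dB)" and T: "density_op (dC*dD) \<tau>"
  shows "r_D_op (dA*dC) (dB*dD) (cut_tensor dA dB dC dD Op \<tau>) \<le> r_D_op dA dB Op"
  unfolding r_D_op_def op_robustness_def
proof (rule Inf_superset_mono, rule image_mono, rule subsetI)
  fix t assume "t \<in> {t. t \<ge> 0 \<and> (\<exists>W. density_op (dA*dB) W \<and> density_op (dA*dB) (complex_of_real (1 / (1 + t)) \<cdot>\<^sub>m (Op + complex_of_real t \<cdot>\<^sub>m W)))}"
  then obtain W where t: "t \<ge> 0" and W: "density_op (dA*dB) W"
    and S: "density_op (dA*dB) (complex_of_real (1 / (1 + t)) \<cdot>\<^sub>m (Op + complex_of_real t \<cdot>\<^sub>m W))" by blast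
  have cW: "W \<in> carrier_mat (dA*dB) (dA*dB)" using W by (simp add: density_op_def psd_op_def)
  have "density_op (dA*dC*(dB*dD)) (cut_tensor dA dB dC dD W \<tau>)" by (rule density_cut[OF W T])
  moreover have "density_op (dA*dC*(dB*dD)) (complex_of_real (1 / (1 + t)) \<cdot>\<^sub>m (cut_tensor dA dB dC dD Op \<tau> + complex_of_real t \<cdot>\<^sub>m cut_tensor dA dB dC dD W \<tau>))"
    using density_cut[OF S T] cut_lin[OF O cW] by simp
  ultimately show "t \<in> {t. t \<ge> 0 \<and> (\<exists>W. density_op (dA*dC*(dB*dD)) W \<and> density_op (dA*dC*(dB*dD)) (complex_of_real (1 / (1 + t)) \<cdot>\<^sub>m (cut_tensor dA dB dC dD Op \<tau> + complex_of_real t \<cdot>\<^sub>m W)))}"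
    using t by blast
qed

lemma Tbox_lin: "Tbox nA nB mX mY dC dD \<tau> \<Lambda> \<Gamma> M2 N2 (\<lambda>a b x y. f a b x y + t * g a b x y) a' b' x' y'
   = Tbox nA nB mX mY dC dD \<tau> \<Lambda> \<Gamma> M2 N2 f a' b' x' y' + t * Tbox nA nB mX mY dC dD \<tau> \<Lambda> \<Gamma> M2 N2 g a' b' x' y'"
  unfolding Tbox_def by (simp add: sum.distrib sum_distrib_left algebra_simps)

lemma Tbox_scale: "Tbox nA nB mX mY dC dD \<tau> \<Lambda> \<Gamma> M2 N2 (\<lambda>a b x y. c * f a b x y) a' b' x' y'
   = c * Tbox nA nB mX mY dC dD \<tau> \<Lambda> \<Gamma> M2 N2 f a' b' x' y'"
  unfolding Tbox_def by (simp add: sum_distrib_left algebra_simps)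

lemma Tbox_cong: "(\<And>a b x y. a < nA \<Longrightarrow> b < nB \<Longrightarrow> x < mX \<Longrightarrow> y < mY \<Longrightarrow> f a b x y = g a b x y) \<Longrightarrow>
   Tbox nA nB mX mY dC dD \<tau> \<Lambda> \<Gamma> M2 N2 f a' b' x' y' = Tbox nA nB mX mY dC dD \<tau> \<Lambda> \<Gamma> M2 N2 g a' b' x' y'"
  unfolding Tbox_def by (intro sum.cong refl) auto

lemma box_rob_T:
  assumes ST: "\<And>w. S w \<Longrightarrow> S' (Tbox nA nB mX mY dC dD \<tau> \<Lambda> \<Gamma> M2 N2 w)"
    and pe: "\<forall>a'<nA'. \<forall>b'<nB'. \<forall>x'<mX'. \<forall>y'<mY'. p' a' b' x' y' = Tbox nA nB mX mY dC dD \<tau> \<Lambda> \<Gamma> M2 N2 p a' b' x' y'"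
  shows "box_robustness S' nA' nB' mX' mY' p' \<le> box_robustness S nA nB mX mY p"
  unfolding box_robustness_def
proof (rule Inf_superset_mono, rule image_mono, rule subsetI)
  let ?T = "Tbox nA nB mX mY dC dD \<tau> \<Lambda> \<Gamma> M2 N2"
  fix t assume "t \<in> {t. t \<ge> 0 \<and> (\<exists>w u. S w \<and> S u \<and>
        (\<forall>a<nA. \<forall>b<nB. \<forall>x<mX. \<forall>y<mY. (p a b x y + t * w a b x y) / (1 + t) = u a b x y))}"
  then obtain w u where t: "t \<ge> 0" and w: "S w" and u: "S u"
    and eq: "\<forall>a<nA. \<forall>b<nB. \<forall>x<mX. \<forall>y<mY. (p a b x y + t * w a b x y) / (1 + t) = u a b x y" by blast
  have eq2: "p a b x y + t * w a b x y = (1 + t) * u a b x y" if "a < nA" "b < nB" "x < mX" "y < mY" for a b x y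
    using eq that t by (auto simp: field_simps)
  have "(p' a' b' x' y' + t * ?T w a' b' x' y') / (1 + t) = ?T u a' b' x' y'"
    if "a' < nA'" "b' < nB'" "x' < mX'" "y' < mY'" for a' b' x' y'
  proof -
    have "p' a' b' x' y' + t * ?T w a' b' x' y' = ?T (\<lambda>a b x y. p a b x y + t * w a b x y) a' b' x' y'"
      using pe that by (simp add: Tbox_lin)
    also have "... = ?T (\<lambda>a b x y. (1 + t) * u a b x y) a' b' x' y'" by (rule Tbox_cong) (simp add: eq2)
    also have "... = (1 + t) * ?T u a' b' x' y'" by (rule Tbox_scale)
    finally show ?thesis using t by simp
  qed
  thus "t \<in> {t. t \<ge> 0 \<and> (\<exists>w u. S' w \<and> S' u \<and>
        (\<forall>a<nA'. \<forall>b<nB'. \<forall>x<mX'. \<forall>y<mY'. (p' a b x y + t * w a b x y) / (1 + t) = u a b x y))}"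
    using t ST[OF w] ST[OF u] by blast
qed

lemma produces_cong: "produces nA nB mX mY dA dB Op p \<Longrightarrow>
   (\<forall>a<nA. \<forall>b<nB. \<forall>x<mX. \<forall>y<mY. q a b x y = p a b x y) \<Longrightarrow> produces nA nB mX mY dA dB Op q"
  unfolding produces_def by auto

theorem mainTheorem8:
  fixes nA nB mX mY nA' nB' mX' mY' dC dD :: nat
    and p p' :: "nat \<Rightarrow> nat \<Rightarrow> nat \<Rightarrow> nat \<Rightarrow> real"
    and \<tau> :: "complex mat"
    and \<Lambda> \<Gamma> :: "nat \<Rightarrow> nat \<Rightarrow> complex mat \<Rightarrow> complex mat"
    and M2 N2 :: "nat \<Rightarrow> nat \<Rightarrow> nat \<Rightarrow> nat \<Rightarrow> complex mat"
  assumes ns: "no_signalling nA nB mX mY p"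
    and tau: "density_op (dC*dD) \<tau>"
    and instA: "\<forall>x'<mX'. instrument dC mX (\<lambda>x. \<Lambda> x x')"
    and instB: "\<forall>y'<mY'. instrument dD mY (\<lambda>y. \<Gamma> y y')"
    and povmA: "\<forall>a<nA. \<forall>x<mX. \<forall>x'<mX'. povm dC nA' (\<lambda>a'. M2 a' a x x')"
    and povmB: "\<forall>b<nB. \<forall>y<mY. \<forall>y'<mY'. povm dD nB' (\<lambda>b'. N2 b' b y y')"
    and p'_def: "\<forall>a'<nA'. \<forall>b'<nB'. \<forall>x'<mX'. \<forall>y'<mY'.
       p' a' b' x' y' = (\<Sum>a<nA. \<Sum>b<nB. \<Sum>x<mX. \<Sum>y<mY.
          Re (mtrace (kron (M2 a' a x x') (N2 b' b y y') *
                      map_tensor dC dD dC dD (\<Lambda> x x') (\<Gamma> y y') \<tau>)) * p a b x y)"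
  shows "(separable dC dD \<tau> \<longrightarrow>
            r_L nA' nB' mX' mY' p' \<le> r_L nA nB mX mY p \<and>
            r_S_box nA' nB' mX' mY' p' \<le> r_S_box nA nB mX mY p)
       \<and> r_Q nA' nB' mX' mY' p' \<le> r_Q nA nB mX mY p
       \<and> r_D_box nA' nB' mX' mY' p' \<le> r_D_box nA nB mX mY p
       \<and> (\<forall>dA dB Op. pseudo_state (dA*dB) Op \<and> produces nA nB mX mY dA dB Op p \<longrightarrow>
            produces nA' nB' mX' mY' (dA*dC) (dB*dD) (cut_tensor dA dB dC dD Op \<tau>) p')"
proof -
  let ?T = "Tbox nA nB mX mY dC dD \<tau> \<Lambda> \<Gamma> M2 N2"
  have pT: "psd_op (dC*dD) \<tau>" using tau density_op_def by blast
  have pe: "\<forall>a'<nA'. \<forall>b'<nB'. \<forall>x'<mX'. \<forall>y'<mY'. p' a' b' x' y' = ?T p a' b' x' y'"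
    using p'_def unfolding Tbox_def by simp
  have prodT: "produces nA' nB' mX' mY' (dA*dC) (dB*dD) (cut_tensor dA dB dC dD Op \<tau>) p'"
    if "produces nA nB mX mY dA dB Op p" "Op \<in> carrier_mat (dA*dB) (dA*dB)" for dA dB Op
    using produces_cong[OF produces_T[OF that(1) that(2) pT instA instB povmA povmB]] pe by auto
  have P4: "\<forall>dA dB Op. pseudo_state (dA*dB) Op \<and> produces nA nB mX mY dA dB Op p \<longrightarrow>
            produces nA' nB' mX' mY' (dA*dC) (dB*dD) (cut_tensor dA dB dC dD Op \<tau>) p'"
    using prodT unfolding pseudo_state_def hermitian_op_def by blast
  have P1: "r_L nA' nB' mX' mY' p' \<le> r_L nA nB mX mY p \<and> r_S_box nA' nB' mX' mY' p' \<le> r_S_box nA nB mX mY p"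
    if sep: "separable dC dD \<tau>"
  proof
    show "r_L nA' nB' mX' mY' p' \<le> r_L nA nB mX mY p"
      unfolding r_L_def
    proof (rule box_rob_T[OF _ pe])
      fix w assume "local_box nA nB mX mY w"
      thus "local_box nA' nB' mX' mY' (?T w)" by (rule local_T[OF _ sep instA instB povmA povmB])
    qed
    show "r_S_box nA' nB' mX' mY' p' \<le> r_S_box nA nB mX mY p"
      unfolding r_S_box_def
    proof (rule Inf_mono)
      fix b assume "b \<in> {r_S_op dA dB Op |dA dB Op. pseudo_state (dA*dB) Op \<and> produces nA nB mX mY dA dB Op p}"
      then obtain dA dB Op where b: "b = r_S_op dA dB Op" and ps: "pseudo_state (dA*dB) Op"
        and pr: "produces nA nB mX mY dA dB Op p" by blast
      have cO: "Op \<in> carrier_mat (dA*dB) (dA*dB)" using ps unfolding pseudo_state_def hermitian_op_def by blast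
      have "pseudo_state ((dA*dC)*(dB*dD)) (cut_tensor dA dB dC dD Op \<tau>)" using pseudo_cut[OF ps tau] by simp
      moreover have "produces nA' nB' mX' mY' (dA*dC) (dB*dD) (cut_tensor dA dB dC dD Op \<tau>) p'" by (rule prodT[OF pr cO])
      ultimately have "r_S_op (dA*dC) (dB*dD) (cut_tensor dA dB dC dD Op \<tau>) \<in>
          {r_S_op dA dB Op |dA dB Op. pseudo_state (dA*dB) Op \<and> produces nA' nB' mX' mY' dA dB Op p'}" by blast
      moreover have "r_S_op (dA*dC) (dB*dD) (cut_tensor dA dB dC dD Op \<tau>) \<le> b" unfolding b by (rule rS_cut[OF cO sep])
      ultimately show "\<exists>a\<in>{r_S_op dA dB Op |dA dB Op. pseudo_state (dA*dB) Op \<and> produces nA' nB' mX' mY' dA dB Op p'}. a \<le> b"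
        by blast
    qed
  qed
  have P2: "r_Q nA' nB' mX' mY' p' \<le> r_Q nA nB mX mY p"
    unfolding r_Q_def
  proof (rule box_rob_T[OF _ pe])
    fix w assume "quantum_box nA nB mX mY w"
    then obtain dA dB \<rho> where d: "density_op (dA*dB) \<rho>" and pr: "produces nA nB mX mY dA dB \<rho> w"
      unfolding quantum_box_def by blast
    have c: "\<rho> \<in> carrier_mat (dA*dB) (dA*dB)" using d by (simp add: density_op_def psd_op_def)
    have "density_op ((dA*dC)*(dB*dD)) (cut_tensor dA dB dC dD \<rho> \<tau>)" using density_cut[OF d tau] by simp
    moreover have "produces nA' nB' mX' mY' (dA*dC) (dB*dD) (cut_tensor dA dB dC dD \<rho> \<tau>) (?T w)"
      by (rule produces_T[OF pr c pT instA instB povmA povmB])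
    ultimately show "quantum_box nA' nB' mX' mY' (?T w)" unfolding quantum_box_def by blast
  qed
  have P3: "r_D_box nA' nB' mX' mY' p' \<le> r_D_box nA nB mX mY p"
    unfolding r_D_box_def
  proof (rule Inf_mono)
    fix b assume "b \<in> {r_D_op dA dB Op |dA dB Op. pseudo_state (dA*dB) Op \<and> produces nA nB mX mY dA dB Op p}"
    then obtain dA dB Op where b: "b = r_D_op dA dB Op" and ps: "pseudo_state (dA*dB) Op"
      and pr: "produces nA nB mX mY dA dB Op p" by blast
    have cO: "Op \<in> carrier_mat (dA*dB) (dA*dB)" using ps unfolding pseudo_state_def hermitian_op_def by blast
    have "pseudo_state ((dA*dC)*(dB*dD)) (cut_tensor dA dB dC dD Op \<tau>)" using pseudo_cut[OF ps tau] by simp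
    moreover have "produces nA' nB' mX' mY' (dA*dC) (dB*dD) (cut_tensor dA dB dC dD Op \<tau>) p'" by (rule prodT[OF pr cO])
    ultimately have "r_D_op (dA*dC) (dB*dD) (cut_tensor dA dB dC dD Op \<tau>) \<in>
        {r_D_op dA dB Op |dA dB Op. pseudo_state (dA*dB) Op \<and> produces nA' nB' mX' mY' dA dB Op p'}" by blast
    moreover have "r_D_op (dA*dC) (dB*dD) (cut_tensor dA dB dC dD Op \<tau>) \<le> b" unfolding b by (rule rD_cut[OF cO tau])
    ultimately show "\<exists>a\<in>{r_D_op dA dB Op |dA dB Op. pseudo_state (dA*dB) Op \<and> produces nA' nB' mX' mY' dA dB Op p'}. a \<le> b"
      by blast
  qed
  show ?thesis using P1 P2 P3 P4 by blast
qed

end
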